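(* Let $\{X_t\}$ be a Geo-INAR(1) process with $\mu>0$ and $\alpha\in(0,\mu/(1+\mu))$, and let $\mu_\varepsilon=(1-\alpha)\mu$, $\sigma_\varepsilon^2=\mu_\varepsilon(1+\mu_\varepsilon)$. Then: (i) The one-step transition probabilities $p_{ij}=P(X_t=j\mid X_{t-1}=i)$ are, for all $j\ge0$, $p_{0j}=p_\varepsilon(j)$ and, for $i\ge1$, $$p_{ij}=p_\varepsilon(j)\Big[\pi_\star^{i}+\sum_{m=1}^{j}\sum_{l=1}^{m}\Big(1+\frac{1}{\mu_\varepsilon}\Big)^{m}A_l^i(\pi_\star)B_l^m(p)\Big],$$ where $p_\varepsilon(j)=\frac{\mu_\varepsilon^j}{(1+\mu_\varepsilon)^{j+1}}$, $\pi_\star=1-\frac{\alpha}{1+\mu_\varepsilon}$, $p=\frac{\mu_\varepsilon-\alpha}{1+\mu_\varepsilon-\alpha}$, $A_l^i(\pi_\star)=\binom{i+l-1}{l}\pi_\star^i(1-\pi_\star)^l$ and $B_l^m(p)=\binom{m-1}{l-1}p^{m-l}(1-p)^l$. (ii) $E(X_{t+1}\mid X_t)=\alpha X_t+(1-\alpha)\mu$. (iii) $\mathrm{Var}(X_{t+1}\mid X_t)=(1+2\mu)(1-\alpha)\alpha X_t+\sigma_\varepsilon^2$. (iv) $\mathrm{corr}(X_{t+h},X_t)=\alpha^h$ for all $h\in\mathbb N$.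
   Context: Geo-INAR(1) process: fix $\mu>0$, $\alpha\in(0,1)$, $\mu_\varepsilon=(1-\alpha)\mu$, $\pi=1-\alpha/\mu_\varepsilon$. Let $\{\varepsilon_t\}$ be i.i.d. $\mathrm{Geo}(\mu_\varepsilon)$ and, for each $t$, let $\{G_{t,i}\}_{i\ge1}$ be i.i.d. $\mathrm{ZMG}(\pi,\mu_\varepsilon)$, all mutually independent. The process satisfies $X_t=\sum_{i=1}^{X_{t-1}}G_{t,i}+\varepsilon_t$, $\varepsilon_t$ independent of $X_{t-h}$ for $h\ge1$, and $X_t\sim\mathrm{Geo}(\mu)$ for all $t$. $\mathrm{Geo}(m)$ has $P(k)=\frac{m^k}{(1+m)^{k+1}}$; $\mathrm{ZMG}(\pi,m)$ has $P(0)=\pi+\frac{1-\pi}{1+m}$, $P(k)=(1-\pi)\frac{m^k}{(1+m)^{k+1}}$, $k\ge1$. *)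

theory Defs
  imports "HOL-Probability.Probability"
begin

definition geo_prob :: "real \<Rightarrow> nat \<Rightarrow> real" where
  "geo_prob m k = m ^ k / (1 + m) ^ (k + 1)"

definition zmg_prob :: "real \<Rightarrow> real \<Rightarrow> nat \<Rightarrow> real" where
  "zmg_prob q m k = (if k = 0 then q + (1 - q) / (1 + m)
                      else (1 - q) * m ^ k / (1 + m) ^ (k + 1))"

text \<open>Index type for the independent building blocks of the process:
  the initial value X_0, the innovations eps_t and the counting series G_{t,i}.\<close>
datatype inar_idx = Init | Eps nat | Thin nat nat

definition inar_vars ::
  "(nat \<Rightarrow> 'a \<Rightarrow> nat) \<Rightarrow> (nat \<Rightarrow> 'a \<Rightarrow> nat) \<Rightarrow> (nat \<Rightarrow> nat \<Rightarrow> 'a \<Rightarrow> nat) \<Rightarrow> inar_idx \<Rightarrow> 'a \<Rightarrow> nat" where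
  "inar_vars X eps G k = (case k of Init \<Rightarrow> X 0 | Eps t \<Rightarrow> eps t | Thin t i \<Rightarrow> G t i)"

definition inar_index_set :: "inar_idx set" where
  "inar_index_set = {Init} \<union> {Eps t | t. t \<ge> 1} \<union> {Thin t i | t i. t \<ge> 1 \<and> i \<ge> 1}"

definition cond_expect_at :: "'a measure \<Rightarrow> ('a \<Rightarrow> real) \<Rightarrow> ('a \<Rightarrow> nat) \<Rightarrow> nat \<Rightarrow> real" where
  "cond_expect_at M Y X i =
     (\<integral>\<omega>. Y \<omega> * indicator {\<omega>\<in>space M. X \<omega> = i} \<omega> \<partial>M) / measure M {\<omega>\<in>space M. X \<omega> = i}"

definition cond_var_at :: "'a measure \<Rightarrow> ('a \<Rightarrow> real) \<Rightarrow> ('a \<Rightarrow> nat) \<Rightarrow> nat \<Rightarrow> real" where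
  "cond_var_at M Y X i = cond_expect_at M (\<lambda>\<omega>. (Y \<omega> - cond_expect_at M Y X i)\<^sup>2) X i"

definition covariance :: "'a measure \<Rightarrow> ('a \<Rightarrow> real) \<Rightarrow> ('a \<Rightarrow> real) \<Rightarrow> real" where
  "covariance M Y Z = (\<integral>\<omega>. (Y \<omega> - (\<integral>x. Y x \<partial>M)) * (Z \<omega> - (\<integral>x. Z x \<partial>M)) \<partial>M)"

definition correlation :: "'a measure \<Rightarrow> ('a \<Rightarrow> real) \<Rightarrow> ('a \<Rightarrow> real) \<Rightarrow> real" where
  "correlation M Y Z = covariance M Y Z / sqrt (covariance M Y Y * covariance M Z Z)"

end

theory Submission
  imports Defs
begin

section \<open>Combinatorial recurrence\<close>

definition uu :: "real \<Rightarrow> real \<Rightarrow> nat \<Rightarrow> nat \<Rightarrow> real" where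
  "uu a p i m = (\<Sum>l\<le>m. real ((i + l) choose (Suc l)) * real (m choose l) * a ^ Suc l * p ^ (m - l))"

definition vv :: "real \<Rightarrow> real \<Rightarrow> nat \<Rightarrow> nat \<Rightarrow> real" where
  "vv a p i m = (\<Sum>l\<le>m. real ((i + l) choose l) * real (m choose l) * a ^ Suc l * p ^ (m - l))"

lemma uu_Suc_i: "uu a p (Suc i) n = uu a p i n + vv a p i n"
  unfolding uu_def vv_def sum.distrib[symmetric]
  by (intro sum.cong refl) (simp add: algebra_simps)

lemma choose_Suc_split: "((Suc m) choose l) = (m choose l) + (if l = 0 then 0 else (m choose (l - 1)))"
  by (cases l) auto

lemma vv_Suc_m: "vv a p i (Suc m) = p * vv a p i m + a * uu a p (Suc i) m"
proof -
  define f1 where "f1 l = real ((i + l) choose l) * real (m choose l) * a ^ Suc l * p ^ (Suc m - l)" for l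
  define f2 where "f2 l = (if l = 0 then 0 else real ((i + l) choose l) * real (m choose (l - 1)) * a ^ Suc l * p ^ (Suc m - l))" for l
  have "vv a p i (Suc m) = (\<Sum>l\<le>Suc m. f1 l + f2 l)"
    unfolding vv_def f1_def f2_def
    by (intro sum.cong refl) (simp add: choose_Suc_split algebra_simps)
  also have "\<dots> = (\<Sum>l\<le>Suc m. f1 l) + (\<Sum>l\<le>Suc m. f2 l)" by (rule sum.distrib)
  also have "(\<Sum>l\<le>Suc m. f1 l) = p * vv a p i m"
  proof -
    have "(\<Sum>l\<le>Suc m. f1 l) = (\<Sum>l\<le>m. f1 l)" by (simp add: f1_def)
    also have "\<dots> = p * vv a p i m"
      unfolding vv_def sum_distrib_left f1_def
      by (intro sum.cong refl) (simp add: Suc_diff_le algebra_simps)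
    finally show ?thesis .
  qed
  also have "(\<Sum>l\<le>Suc m. f2 l) = a * uu a p (Suc i) m"
  proof -
    have "(\<Sum>l\<le>Suc m. f2 l) = f2 0 + (\<Sum>l\<le>m. f2 (Suc l))" by (rule sum.atMost_Suc_shift)
    also have "\<dots> = (\<Sum>l\<le>m. f2 (Suc l))" by (simp add: f2_def)
    also have "\<dots> = a * uu a p (Suc i) m"
      unfolding uu_def sum_distrib_left f2_def
      by (intro sum.cong refl) (simp add: algebra_simps)
    finally show ?thesis .
  qed
  finally show ?thesis .
qed

lemma uu_rec:
  assumes "q = p + a"
  shows "uu a p (Suc i) (Suc m) - q * uu a p (Suc i) m = uu a p i (Suc m) - p * uu a p i m"
  using assms by (simp add: uu_Suc_i vv_Suc_m algebra_simps)

lemma uu_0: "uu a p i 0 = real i * a"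
  by (simp add: uu_def)

lemma uu_i0: "uu a p 0 m = 0"
  by (simp add: uu_def binomial_eq_0)

definition DD :: "real \<Rightarrow> real \<Rightarrow> real \<Rightarrow> nat \<Rightarrow> nat \<Rightarrow> real" where
  "DD c a p i m = (if m = 0 then c ^ i else c ^ i * uu a p i (m - 1))"

lemma DD_rec:
  assumes "q = p + a"
  shows "DD c a p (Suc i) (Suc m) = q * DD c a p (Suc i) m + c * (DD c a p i (Suc m) - p * DD c a p i m)"
proof (cases m)
  case 0
  then show ?thesis using assms by (simp add: DD_def uu_0 algebra_simps)
next
  case (Suc m')
  have h: "uu a p (Suc i) (Suc m') = q * uu a p (Suc i) m' + (uu a p i (Suc m') - p * uu a p i m')"
    using uu_rec[OF assms, of i m'] by simp
  show ?thesis using Suc by (simp add: DD_def h algebra_simps)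
qed

lemma DD_0: "DD c a p 0 m = (if m = 0 then 1 else 0)"
  by (simp add: DD_def uu_i0)

lemma rec_unique:
  fixes x y :: "nat \<Rightarrow> nat \<Rightarrow> real"
  assumes "\<And>m. x 0 m = y 0 m" "\<And>i. x (Suc i) 0 = y (Suc i) 0"
    and "\<And>i m. x (Suc i) (Suc m) = q * x (Suc i) m + c * (x i (Suc m) - p * x i m)"
    and "\<And>i m. y (Suc i) (Suc m) = q * y (Suc i) m + c * (y i (Suc m) - p * y i m)"
  shows "x i m = y i m"
proof (induction i arbitrary: m)
  case 0 then show ?case using assms(1) by simp
next
  case (Suc i)
  note IHi = Suc.IH
  show ?case
  proof (induction m)
    case 0 then show ?case using assms(2) by simp
  next
    case (Suc m) then show ?case using assms(3,4)[of i m] IHi[of m] IHi[of "Suc m"] by simp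
  qed
qed

lemma DD_explicit:
  assumes "m \<ge> 1"
  shows "DD c a p i m = (\<Sum>l = 1..m. real ((i + l - 1) choose l) * c ^ i * real ((m - 1) choose (l - 1)) * p ^ (m - l) * a ^ l)"
proof -
  obtain m' where m: "m = Suc m'" using assms by (cases m) auto
  have "(\<Sum>l = 1..m. real ((i + l - 1) choose l) * c ^ i * real ((m - 1) choose (l - 1)) * p ^ (m - l) * a ^ l)
      = (\<Sum>l\<le>m'. real ((i + Suc l - 1) choose Suc l) * c ^ i * real ((m - 1) choose (Suc l - 1)) * p ^ (m - Suc l) * a ^ Suc l)"
    unfolding m by (simp only: One_nat_def sum.shift_bounds_cl_Suc_ivl atLeast0AtMost)
  also have "\<dots> = DD c a p i m"
    unfolding DD_def uu_def m by (simp add: sum_distrib_left algebra_simps)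
  finally show ?thesis by simp
qed


section \<open>Independence infrastructure\<close>

lemma (in prob_space) indep_var_cong':
  assumes "indep_var N1 U N2 W" "\<And>\<omega>. \<omega> \<in> space M \<Longrightarrow> U \<omega> = U' \<omega>" "\<And>\<omega>. \<omega> \<in> space M \<Longrightarrow> W \<omega> = W' \<omega>"
  shows "indep_var N1 U' N2 W'"
proof -
  have eU: "\<And>A. U -` A \<inter> space M = U' -` A \<inter> space M" using assms(2) by auto
  have eW: "\<And>A. W -` A \<inter> space M = W' -` A \<inter> space M" using assms(3) by auto
  have mU: "random_variable N1 U = random_variable N1 U'" by (rule measurable_cong) (simp add: assms(2))
  have mW: "random_variable N2 W = random_variable N2 W'" by (rule measurable_cong) (simp add: assms(3))
  show ?thesis using assms(1) unfolding indep_var_eq eU eW mU mW .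
qed

lemma meas_nat_plus:
  fixes f g :: "'b \<Rightarrow> nat"
  assumes "f \<in> measurable N (count_space UNIV)" "g \<in> measurable N (count_space UNIV)"
  shows "(\<lambda>x. f x + g x) \<in> measurable N (count_space UNIV)"
proof -
  have "(\<lambda>x. (\<lambda>n. n + g x) (f x)) \<in> measurable N (count_space UNIV)"
  proof (rule measurable_compose_countable[OF _ assms(1)])
    fix n :: nat
    show "(\<lambda>x. n + g x) \<in> measurable N (count_space UNIV)"
      using measurable_compose[OF assms(2) measurable_count_space[of "\<lambda>m. n + m" UNIV]] by simp
  qed
  then show ?thesis by simp
qed

lemma meas_nat_sum:
  fixes f :: "'i \<Rightarrow> 'b \<Rightarrow> nat"
  assumes "finite S" "\<And>i. i \<in> S \<Longrightarrow> f i \<in> measurable N (count_space UNIV)"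
  shows "(\<lambda>x. \<Sum>i\<in>S. f i x) \<in> measurable N (count_space UNIV)"
  using assms
proof (induction S rule: finite_induct)
  case empty then show ?case by simp
next
  case (insert a S)
  then show ?case by (simp add: meas_nat_plus)
qed

fun itime :: "inar_idx \<Rightarrow> nat" where
  "itime Init = 0" | "itime (inar_idx.Eps t) = t" | "itime (Thin t i) = t"

definition Past :: "nat \<Rightarrow> inar_idx set" where
  "Past s = {k \<in> inar_index_set. itime k \<le> s}"

fun fX :: "nat \<Rightarrow> (inar_idx \<Rightarrow> nat) \<Rightarrow> nat" where
  "fX 0 y = y Init"
| "fX (Suc s) y = (\<Sum>i = 1..fX s y. y (Thin (Suc s) i)) + y (inar_idx.Eps (Suc s))"

lemma Init_Past[simp]: "Init \<in> Past s"
  by (simp add: Past_def inar_index_set_def)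

lemma Eps_Past[simp]: "inar_idx.Eps t \<in> Past s \<longleftrightarrow> 1 \<le> t \<and> t \<le> s"
  by (auto simp: Past_def inar_index_set_def)

lemma Thin_Past[simp]: "Thin t i \<in> Past s \<longleftrightarrow> 1 \<le> t \<and> 1 \<le> i \<and> t \<le> s"
  by (auto simp: Past_def inar_index_set_def)

lemma Past_mono: "s \<le> s' \<Longrightarrow> Past s \<subseteq> Past s'"
  by (auto simp: Past_def)

lemma Past_sub: "Past s \<subseteq> inar_index_set"
  by (auto simp: Past_def)

lemma fX_cong: "(\<And>k. k \<in> Past s \<Longrightarrow> y k = z k) \<Longrightarrow> fX s y = fX s z"
proof (induction s)
  case 0 then show ?case by simp
next
  case (Suc s)
  have "fX s y = fX s z" using Suc.prems Past_mono[of s "Suc s"] by (intro Suc.IH) auto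
  moreover have "\<And>i. i \<in> {1..fX s z} \<Longrightarrow> y (Thin (Suc s) i) = z (Thin (Suc s) i)"
    using Suc.prems by auto
  ultimately show ?case using Suc.prems by simp
qed

lemma fX_meas:
  assumes "Past s \<subseteq> K"
  shows "fX s \<in> measurable (PiM K (\<lambda>_. count_space UNIV)) (count_space UNIV)"
  using assms
proof (induction s)
  case 0
  then have "Init \<in> K" by auto
  then have "(\<lambda>y. y Init) \<in> measurable (PiM K (\<lambda>_. count_space UNIV)) ((\<lambda>_. count_space UNIV) Init)"
    by (rule measurable_component_singleton)
  then show ?case by simp
next
  case (Suc s)
  have IH: "fX s \<in> measurable (PiM K (\<lambda>_. count_space UNIV)) (count_space UNIV)"
    using Suc Past_mono[of s "Suc s"] by auto
  have "(\<lambda>y. (\<lambda>n. (\<Sum>i = 1..n. y (Thin (Suc s) i)) + y (inar_idx.Eps (Suc s))) (fX s y))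
        \<in> measurable (PiM K (\<lambda>_. count_space UNIV)) (count_space UNIV)"
  proof (rule measurable_compose_countable[OF _ IH])
    fix n
    show "(\<lambda>y::inar_idx \<Rightarrow> nat. (\<Sum>i = 1..n. y (Thin (Suc s) i)) + y (inar_idx.Eps (Suc s))) \<in> measurable (PiM K (\<lambda>_. count_space UNIV)) (count_space UNIV)"
    proof (rule meas_nat_plus)
      have c: "(\<lambda>y::inar_idx \<Rightarrow> nat. y k) \<in> measurable (PiM K (\<lambda>_. count_space UNIV)) (count_space UNIV)" if "k \<in> K" for k
      proof -
        have "(\<lambda>y::inar_idx \<Rightarrow> nat. y k) \<in> measurable (PiM K (\<lambda>_. count_space UNIV)) ((\<lambda>_. count_space UNIV) k)"
          using that by (rule measurable_component_singleton)
        then show ?thesis by simp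
      qed
      show "(\<lambda>y::inar_idx \<Rightarrow> nat. \<Sum>i = 1..n. y (Thin (Suc s) i)) \<in> measurable (PiM K (\<lambda>_. count_space UNIV)) (count_space UNIV)"
        using Suc.prems by (intro meas_nat_sum c) auto
      show "(\<lambda>y::inar_idx \<Rightarrow> nat. y (inar_idx.Eps (Suc s))) \<in> measurable (PiM K (\<lambda>_. count_space UNIV)) (count_space UNIV)"
        using Suc.prems by (intro c) auto
    qed
  qed
  then show ?case by simp
qed


lemma conv_rec:
  fixes h g :: "nat \<Rightarrow> real"
  assumes g0: "g 0 = c" and g1: "g 1 = q * c - c * p" and gS: "\<And>k. g (Suc (Suc k)) = q * g (Suc k)"
  shows "(\<Sum>k\<le>Suc m. h k * g (Suc m - k)) = q * (\<Sum>k\<le>m. h k * g (m - k)) + c * (h (Suc m) - p * h m)"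
proof -
  have e: "g (Suc m - k) = q * g (m - k) + (if k = m then g 1 - q * g 0 else 0)" if "k \<le> m" for k
  proof (cases "k = m")
    case True then show ?thesis by simp
  next
    case False
    have "m - k = Suc (m - Suc k)" using that False by arith
    then obtain j where j: "m - k = Suc j" by blast
    then have "Suc m - k = Suc (Suc j)" using that by simp
    then show ?thesis using False j gS by simp
  qed
  have eq1: "(\<Sum>k\<le>Suc m. h k * g (Suc m - k)) = (\<Sum>k\<le>m. h k * g (Suc m - k)) + h (Suc m) * g 0"
    by simp
  have "(\<Sum>k\<le>m. h k * g (Suc m - k)) = (\<Sum>k\<le>m. q * (h k * g (m - k)) + (if k = m then h k * (g 1 - q * g 0) else 0))"
    by (intro sum.cong refl) (simp add: e algebra_simps)
  also have "\<dots> = q * (\<Sum>k\<le>m. h k * g (m - k)) + h m * (g 1 - q * g 0)"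
    by (simp add: sum.distrib sum_distrib_left)
  finally have eq2: "(\<Sum>k\<le>m. h k * g (Suc m - k)) = q * (\<Sum>k\<le>m. h k * g (m - k)) + h m * (g 1 - q * g 0)" .
  show ?thesis unfolding eq1 eq2 g1 g0 by (simp add: algebra_simps)
qed

lemma (in prob_space) conv_indep:
  fixes U W :: "'a \<Rightarrow> nat"
  assumes ind: "indep_var (count_space UNIV) U (count_space UNIV) W"
  shows "prob {\<omega>\<in>space M. U \<omega> + W \<omega> = m} = (\<Sum>k\<le>m. prob {\<omega>\<in>space M. U \<omega> = k} * prob {\<omega>\<in>space M. W \<omega> = m - k})"
proof -
  have rU: "random_variable (count_space UNIV) U" using indep_var_rv1[OF ind] .
  have rW: "random_variable (count_space UNIV) W" using indep_var_rv2[OF ind] .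
  define A where "A k = {\<omega>\<in>space M. U \<omega> = k \<and> W \<omega> = m - k}" for k
  have "{\<omega>\<in>space M. U \<omega> + W \<omega> = m} = (\<Union>k\<in>{..m}. A k)"
    by (auto simp: A_def)
  moreover have "A ` {..m} \<subseteq> events"
  proof safe
    fix k
    have "A k = (U -` {k} \<inter> space M) \<inter> (W -` {m - k} \<inter> space M)" by (auto simp: A_def)
    then show "A k \<in> events" using measurable_sets[OF rU, of "{k}"] measurable_sets[OF rW, of "{m - k}"] by simp
  qed
  moreover have "disjoint_family_on A {..m}"
    by (auto simp: disjoint_family_on_def A_def)
  ultimately have "prob {\<omega>\<in>space M. U \<omega> + W \<omega> = m} = (\<Sum>k\<le>m. prob (A k))"
    by (simp add: finite_measure_finite_Union)
  also have "\<dots> = (\<Sum>k\<le>m. prob {\<omega>\<in>space M. U \<omega> = k} * prob {\<omega>\<in>space M. W \<omega> = m - k})"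
  proof (intro sum.cong refl)
    fix k
    have "prob (A k) = \<P>(x in M. U x \<in> {k} \<and> W x \<in> {m - k})" by (simp add: A_def)
    also have "\<dots> = \<P>(x in M. U x \<in> {k}) * \<P>(x in M. W x \<in> {m - k})"
      by (rule prob_indep_random_variable[OF ind]) auto
    finally show "prob (A k) = prob {\<omega>\<in>space M. U \<omega> = k} * prob {\<omega>\<in>space M. W \<omega> = m - k}" by simp
  qed
  finally show ?thesis .
qed

lemma comp_meas:
  assumes "k \<in> K"
  shows "(\<lambda>y::inar_idx \<Rightarrow> nat. y k) \<in> measurable (PiM K (\<lambda>_. count_space UNIV)) (count_space UNIV)"
proof -
  have "(\<lambda>y::inar_idx \<Rightarrow> nat. y k) \<in> measurable (PiM K (\<lambda>_. count_space UNIV)) ((\<lambda>_. count_space UNIV) k)"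
    using assms by (rule measurable_component_singleton)
  then show ?thesis by simp
qed

definition BS :: "nat \<Rightarrow> nat \<Rightarrow> inar_idx set" where
  "BS t n = {Thin t i | i. 1 \<le> i \<and> i \<le> n}"

definition BT :: "nat \<Rightarrow> nat \<Rightarrow> inar_idx set" where
  "BT t n = insert (inar_idx.Eps t) (BS t n)"

lemma BS_sub: "t \<ge> 1 \<Longrightarrow> BS t n \<subseteq> inar_index_set"
  by (auto simp: BS_def inar_index_set_def)

lemma BT_sub: "t \<ge> 1 \<Longrightarrow> BT t n \<subseteq> inar_index_set"
  by (auto simp: BT_def BS_def inar_index_set_def)

lemma FS_meas: "(\<lambda>y::inar_idx \<Rightarrow> nat. \<Sum>i = 1..n. y (Thin t i)) \<in> measurable (PiM (BS t n) (\<lambda>_. count_space UNIV)) (count_space UNIV)"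
  by (intro meas_nat_sum comp_meas) (auto simp: BS_def)

lemma FT_meas: "(\<lambda>y::inar_idx \<Rightarrow> nat. (\<Sum>i = 1..n. y (Thin t i)) + y (inar_idx.Eps t)) \<in> measurable (PiM (BT t n) (\<lambda>_. count_space UNIV)) (count_space UNIV)"
  by (intro meas_nat_plus meas_nat_sum comp_meas) (auto simp: BT_def BS_def)


section \<open>Series and moments\<close>

lemma geo2_sums:
  fixes z :: real
  assumes "\<bar>z\<bar> < 1"
  shows "(\<lambda>n. (real (Suc n) * real (Suc (Suc n))) * z ^ n) sums (2 / (1 - z) ^ 3)"
proof -
  have "(\<lambda>n. diffs (\<lambda>n. real (Suc n)) n * z ^ n) sums (2 / (1 - z) ^ 3)"
  proof (rule termdiffs_sums_strong[where K=1 and f="\<lambda>z. 1 / (1 - z) ^ 2"])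
    fix w :: real assume "norm w < 1"
    then show "(\<lambda>n. real (Suc n) * w ^ n) sums (1 / (1 - w) ^ 2)"
      using geometric_deriv_sums[of w] by simp
  next
    have "z \<noteq> 1" using assms by auto
    define w where "w = 1 - z"
    have w: "w \<noteq> 0" using \<open>z \<noteq> 1\<close> by (simp add: w_def)
    have e: "(2 - z * 2) / (1 - z) ^ 4 = 2 / (1 - z) ^ 3"
    proof -
      have "2 - z * 2 = 2 * w" by (simp add: w_def)
      then show ?thesis unfolding w_def[symmetric] using w by (simp add: divide_simps eval_nat_numeral)
    qed
    show "((\<lambda>z. 1 / (1 - z) ^ 2) has_field_derivative 2 / (1 - z) ^ 3) (at z)"
      apply (rule derivative_eq_intros refl)+
      using w apply (simp add: divide_simps eval_nat_numeral w_def)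
      apply (simp add: algebra_simps e)
      done
  next
    show "norm z < 1" using assms by simp
  qed
  then show ?thesis by (simp add: diffs_def)
qed

lemma geo_sums0:
  fixes q :: real assumes "0 \<le> q" "q < 1"
  shows "(\<lambda>n. q ^ n) sums (1 / (1 - q))"
  using geometric_sums[of q] assms by simp

lemma geo_sums1:
  fixes q :: real assumes "0 \<le> q" "q < 1"
  shows "(\<lambda>n. real n * q ^ n) sums (q / (1 - q) ^ 2)"
proof -
  have a: "(\<lambda>n. real (Suc n) * q ^ n) sums (1 / (1 - q) ^ 2)"
    using geometric_deriv_sums[of q] assms by simp
  have "(\<lambda>n. real (Suc n) * q ^ n - q ^ n) sums (1 / (1 - q) ^ 2 - 1 / (1 - q))"
    by (rule sums_diff[OF a geo_sums0[OF assms]])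
  moreover have "1 / (1 - q) ^ 2 - 1 / (1 - q) = q / (1 - q) ^ 2"
  proof -
    have w: "1 - q \<noteq> 0" using assms by simp
    show ?thesis using w by (simp add: divide_simps) (simp add: algebra_simps power2_eq_square)
  qed
  ultimately show ?thesis by (simp add: algebra_simps)
qed

lemma geo_sums2:
  fixes q :: real assumes "0 \<le> q" "q < 1"
  shows "(\<lambda>n. (real n)\<^sup>2 * q ^ n) sums (q * (1 + q) / (1 - q) ^ 3)"
proof -
  have a: "(\<lambda>n. real (Suc n) * q ^ n) sums (1 / (1 - q) ^ 2)"
    using geometric_deriv_sums[of q] assms by simp
  have b: "(\<lambda>n. (real (Suc n) * real (Suc (Suc n))) * q ^ n) sums (2 / (1 - q) ^ 3)"
    using geo2_sums[of q] assms by simp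
  have "(\<lambda>n. (real (Suc n) * real (Suc (Suc n))) * q ^ n - 3 * (real (Suc n) * q ^ n) + q ^ n)
      sums (2 / (1 - q) ^ 3 - 3 * (1 / (1 - q) ^ 2) + 1 / (1 - q))"
    by (intro sums_add sums_diff sums_mult b a geo_sums0 assms)
  moreover have "2 / (1 - q) ^ 3 - 3 * (1 / (1 - q) ^ 2) + 1 / (1 - q) = q * (1 + q) / (1 - q) ^ 3"
  proof -
    define w where "w = 1 - q"
    have w: "w \<noteq> 0" using assms by (simp add: w_def)
    have q: "q = 1 - w" by (simp add: w_def)
    show ?thesis unfolding w_def[symmetric] unfolding q using w by (simp add: divide_simps eval_nat_numeral) (simp add: algebra_simps)
  qed
  moreover have "\<And>n. (real (Suc n) * real (Suc (Suc n))) * q ^ n - 3 * (real (Suc n) * q ^ n) + q ^ n = (real n)\<^sup>2 * q ^ n"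
    by (simp add: algebra_simps power2_eq_square)
  ultimately show ?thesis by simp
qed

lemma geo_prob_alt: "geo_prob m k = (1 / (1 + m)) * (m / (1 + m)) ^ k"
  unfolding geo_prob_def by (simp add: power_divide)

lemma geo_mom1:
  fixes m :: real assumes "m > 0"
  shows "(\<lambda>k. real k * geo_prob m k) sums m"
proof -
  have q: "0 \<le> m / (1 + m)" "m / (1 + m) < 1" using assms by auto
  have "(\<lambda>k. (1 / (1 + m)) * (real k * (m / (1 + m)) ^ k)) sums ((1 / (1 + m)) * ((m / (1 + m)) / (1 - m / (1 + m)) ^ 2))"
    by (rule sums_mult[OF geo_sums1[OF q]])
  moreover have "(1 / (1 + m)) * ((m / (1 + m)) / (1 - m / (1 + m)) ^ 2) = m"
  proof -
    have e: "1 - m / (1 + m) = 1 / (1 + m)" using assms by (simp add: divide_simps)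
    show ?thesis unfolding e using assms by (simp add: power2_eq_square divide_simps)
  qed
  ultimately show ?thesis by (simp add: geo_prob_alt algebra_simps)
qed

lemma geo_mom2:
  fixes m :: real assumes "m > 0"
  shows "(\<lambda>k. (real k)\<^sup>2 * geo_prob m k) sums (m * (1 + 2 * m))"
proof -
  have q: "0 \<le> m / (1 + m)" "m / (1 + m) < 1" using assms by auto
  have "(\<lambda>k. (1 / (1 + m)) * ((real k)\<^sup>2 * (m / (1 + m)) ^ k)) sums ((1 / (1 + m)) * ((m / (1 + m)) * (1 + m / (1 + m)) / (1 - m / (1 + m)) ^ 3))"
    by (rule sums_mult[OF geo_sums2[OF q]])
  moreover have "(1 / (1 + m)) * ((m / (1 + m)) * (1 + m / (1 + m)) / (1 - m / (1 + m)) ^ 3) = m * (1 + 2 * m)"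
  proof -
    have e: "1 - m / (1 + m) = 1 / (1 + m)" using assms by (simp add: divide_simps)
    show ?thesis unfolding e using assms by (simp add: power3_eq_cube divide_simps)
  qed
  ultimately show ?thesis by (simp add: geo_prob_alt algebra_simps)
qed

lemma zmg_geo: "k \<noteq> 0 \<Longrightarrow> zmg_prob q m k = (1 - q) * geo_prob m k"
  unfolding zmg_prob_def geo_prob_def by simp

lemma zmg_mom1:
  fixes m :: real assumes "m > 0"
  shows "(\<lambda>k. real k * zmg_prob q m k) sums ((1 - q) * m)"
proof -
  have "(\<lambda>k. (1 - q) * (real k * geo_prob m k)) sums ((1 - q) * m)"
    by (rule sums_mult[OF geo_mom1[OF assms]])
  moreover have "(\<lambda>k. real k * zmg_prob q m k) = (\<lambda>k. (1 - q) * (real k * geo_prob m k))"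
    by (rule ext, case_tac "k = 0") (simp_all add: zmg_geo)
  ultimately show ?thesis by simp
qed

lemma zmg_mom2:
  fixes m :: real assumes "m > 0"
  shows "(\<lambda>k. (real k)\<^sup>2 * zmg_prob q m k) sums ((1 - q) * (m * (1 + 2 * m)))"
proof -
  have "(\<lambda>k. (1 - q) * ((real k)\<^sup>2 * geo_prob m k)) sums ((1 - q) * (m * (1 + 2 * m)))"
    by (rule sums_mult[OF geo_mom2[OF assms]])
  moreover have "(\<lambda>k. (real k)\<^sup>2 * zmg_prob q m k) = (\<lambda>k. (1 - q) * ((real k)\<^sup>2 * geo_prob m k))"
    by (rule ext, case_tac "k = 0") (simp_all add: zmg_geo)
  ultimately show ?thesis by simp
qed

lemma (in prob_space) nn_nat_rv:
  fixes W :: "'a \<Rightarrow> nat" and f :: "nat \<Rightarrow> real"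
  assumes rv: "random_variable (count_space UNIV) W" and f0: "\<And>k. 0 \<le> f k"
  shows "(\<integral>\<^sup>+\<omega>. ennreal (f (W \<omega>)) \<partial>M) = (\<Sum>k. ennreal (f k * prob {\<omega>\<in>space M. W \<omega> = k}))"
proof -
  have ev: "{\<omega>\<in>space M. W \<omega> = k} \<in> events" for k
    using measurable_sets[OF rv, of "{k}"] by (simp add: vimage_def Int_def conj_commute)
  have pt: "ennreal (f (W \<omega>)) = (\<Sum>k. ennreal (f k) * indicator {\<omega>\<in>space M. W \<omega> = k} \<omega>)" if "\<omega> \<in> space M" for \<omega>
  proof -
    have "(\<Sum>k. ennreal (f k) * indicator {\<omega>\<in>space M. W \<omega> = k} \<omega>) = (\<Sum>k\<in>{W \<omega>}. ennreal (f k) * indicator {\<omega>\<in>space M. W \<omega> = k} \<omega>)"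
      by (rule suminf_finite) (auto simp: indicator_def)
    then show ?thesis using that by simp
  qed
  have "(\<integral>\<^sup>+\<omega>. ennreal (f (W \<omega>)) \<partial>M) = (\<integral>\<^sup>+\<omega>. (\<Sum>k. ennreal (f k) * indicator {\<omega>\<in>space M. W \<omega> = k} \<omega>) \<partial>M)"
    by (rule nn_integral_cong) (simp add: pt)
  also have "\<dots> = (\<Sum>k. \<integral>\<^sup>+\<omega>. ennreal (f k) * indicator {\<omega>\<in>space M. W \<omega> = k} \<omega> \<partial>M)"
    using ev by (intro nn_integral_suminf) (auto intro!: borel_measurable_indicator)
  also have "\<dots> = (\<Sum>k. ennreal (f k * prob {\<omega>\<in>space M. W \<omega> = k}))"
    using ev f0 by (simp add: nn_integral_cmult_indicator emeasure_eq_measure ennreal_mult)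
  finally show ?thesis .
qed

lemma (in prob_space) moment_nat:
  fixes W :: "'a \<Rightarrow> nat" and f :: "nat \<Rightarrow> real"
  assumes rv: "random_variable (count_space UNIV) W" and f0: "\<And>k. 0 \<le> f k"
    and sm: "(\<lambda>k. f k * prob {\<omega>\<in>space M. W \<omega> = k}) sums s"
  shows "(\<integral>\<^sup>+\<omega>. ennreal (f (W \<omega>)) \<partial>M) = ennreal s"
    and "integrable M (\<lambda>\<omega>. f (W \<omega>))"
    and "(\<integral>\<omega>. f (W \<omega>) \<partial>M) = s"
proof -
  show nn: "(\<integral>\<^sup>+\<omega>. ennreal (f (W \<omega>)) \<partial>M) = ennreal s"
  proof -
    have "(\<Sum>k. ennreal (f k * prob {\<omega>\<in>space M. W \<omega> = k})) = ennreal s"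
      by (rule suminf_ennreal_eq) (use f0 sm in auto)
    then show ?thesis using nn_nat_rv[where f=f, OF rv f0] by simp
  qed
  have meas: "(\<lambda>\<omega>. f (W \<omega>)) \<in> borel_measurable M"
    using measurable_compose[OF rv, of f borel] by simp
  show int: "integrable M (\<lambda>\<omega>. f (W \<omega>))"
    by (rule integrableI_nn_integral_finite[OF meas _ nn]) (simp add: f0)
  have "(\<integral>\<^sup>+\<omega>. ennreal (f (W \<omega>)) \<partial>M) = ennreal (\<integral>\<omega>. f (W \<omega>) \<partial>M)"
    by (rule nn_integral_eq_integral[OF int]) (simp add: f0)
  then have "ennreal (\<integral>\<omega>. f (W \<omega>) \<partial>M) = ennreal s" using nn by simp
  moreover have "0 \<le> (\<integral>\<omega>. f (W \<omega>) \<partial>M)" by (simp add: f0)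
  moreover have "0 \<le> s" using sums_le[OF _ sums_zero sm] f0 by simp
  ultimately show "(\<integral>\<omega>. f (W \<omega>) \<partial>M) = s" by simp
qed


lemma (in prob_space) nn_to_int:
  fixes f :: "'a \<Rightarrow> real"
  assumes fm: "f \<in> borel_measurable M" and f0: "\<And>\<omega>. 0 \<le> f \<omega>"
    and nn: "(\<integral>\<^sup>+\<omega>. ennreal (f \<omega>) \<partial>M) = ennreal x" and x0: "0 \<le> x"
  shows "integrable M f" "(\<integral>\<omega>. f \<omega> \<partial>M) = x"
proof -
  show int: "integrable M f"
    by (rule integrableI_nn_integral_finite[OF fm _ nn]) (simp add: f0)
  have "(\<integral>\<^sup>+\<omega>. ennreal (f \<omega>) \<partial>M) = ennreal (\<integral>\<omega>. f \<omega> \<partial>M)"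
    by (rule nn_integral_eq_integral[OF int]) (simp add: f0)
  then have "ennreal (\<integral>\<omega>. f \<omega> \<partial>M) = ennreal x" using nn by simp
  moreover have "0 \<le> (\<integral>\<omega>. f \<omega> \<partial>M)" by (simp add: f0)
  ultimately show "(\<integral>\<omega>. f \<omega> \<partial>M) = x" using x0 by simp
qed

lemma (in prob_space) cov_eq:
  fixes Y Z :: "'a \<Rightarrow> real"
  assumes iY: "integrable M Y" and iZ: "integrable M Z" and iYZ: "integrable M (\<lambda>\<omega>. Y \<omega> * Z \<omega>)"
  shows "covariance M Y Z = (\<integral>\<omega>. Y \<omega> * Z \<omega> \<partial>M) - (\<integral>\<omega>. Y \<omega> \<partial>M) * (\<integral>\<omega>. Z \<omega> \<partial>M)"
proof -
  define a where "a = (\<integral>\<omega>. Y \<omega> \<partial>M)"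
  define b where "b = (\<integral>\<omega>. Z \<omega> \<partial>M)"
  have e: "(\<lambda>\<omega>. (Y \<omega> - a) * (Z \<omega> - b)) = (\<lambda>\<omega>. (Y \<omega> * Z \<omega> - b * Y \<omega>) - (a * Z \<omega> - a * b))"
    by (auto simp: algebra_simps)
  have "covariance M Y Z = (\<integral>\<omega>. (Y \<omega> * Z \<omega> - b * Y \<omega>) - (a * Z \<omega> - a * b) \<partial>M)"
    unfolding covariance_def a_def[symmetric] b_def[symmetric] e ..
  also have "\<dots> = (\<integral>\<omega>. Y \<omega> * Z \<omega> \<partial>M) - b * a - (a * b - a * b)"
    using iY iZ iYZ by (simp add: a_def b_def prob_space)
  finally show ?thesis by (simp add: a_def b_def)
qed

locale geo_inar =
  fixes M :: "'a measure"
    and X :: "nat \<Rightarrow> 'a \<Rightarrow> nat"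
    and eps :: "nat \<Rightarrow> 'a \<Rightarrow> nat"
    and G :: "nat \<Rightarrow> nat \<Rightarrow> 'a \<Rightarrow> nat"
    and \<mu> \<alpha> me pi0 :: real
  assumes M: "prob_space M"
    and mu_pos: "\<mu> > 0"
    and alpha_pos: "0 < \<alpha>" and alpha_bound: "\<alpha> < \<mu> / (1 + \<mu>)"
    and rv_X: "\<And>t. X t \<in> measurable M (count_space UNIV)"
    and rv_eps: "\<And>t. eps t \<in> measurable M (count_space UNIV)"
    and rv_G: "\<And>t i. G t i \<in> measurable M (count_space UNIV)"
    and indep: "prob_space.indep_vars M (\<lambda>_. count_space UNIV) (inar_vars X eps G) inar_index_set"
    and dist_eps: "\<And>t k. t \<ge> 1 \<Longrightarrow> measure M {\<omega>\<in>space M. eps t \<omega> = k} = geo_prob me k"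
    and dist_G: "\<And>t i k. t \<ge> 1 \<Longrightarrow> i \<ge> 1 \<Longrightarrow>
                   measure M {\<omega>\<in>space M. G t i \<omega> = k} = zmg_prob pi0 me k"
    and recursion: "\<And>t \<omega>. t \<ge> 1 \<Longrightarrow> \<omega> \<in> space M \<Longrightarrow>
                   X t \<omega> = (\<Sum>i = 1..X (t - 1) \<omega>. G t i \<omega>) + eps t \<omega>"
    and dist_X: "\<And>t k. measure M {\<omega>\<in>space M. X t \<omega> = k} = geo_prob \<mu> k"
    and me_def: "me = (1 - \<alpha>) * \<mu>"
    and pi0_def: "pi0 = 1 - \<alpha> / me"
begin

sublocale prob_space M by (rule M)

abbreviation "Y \<equiv> inar_vars X eps G"

definition R :: "inar_idx set \<Rightarrow> 'a \<Rightarrow> inar_idx \<Rightarrow> nat" where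
  "R A \<omega> = restrict (\<lambda>k. Y k \<omega>) A"

lemma X_fX: "\<omega> \<in> space M \<Longrightarrow> X s \<omega> = fX s (\<lambda>k. Y k \<omega>)"
proof (induction s)
  case 0 then show ?case by (simp add: inar_vars_def)
next
  case (Suc s)
  then show ?case using recursion[of "Suc s" \<omega>] by (simp add: inar_vars_def)
qed

lemma X_fX_R: "\<omega> \<in> space M \<Longrightarrow> Past s \<subseteq> A \<Longrightarrow> X s \<omega> = fX s (R A \<omega>)"
  unfolding X_fX R_def by (rule fX_cong) auto

lemma core_indep:
  assumes "A \<inter> B = {}" "A \<subseteq> inar_index_set" "B \<subseteq> inar_index_set"
    and "h \<in> measurable (PiM A (\<lambda>_. count_space UNIV)) N1"
    and "F \<in> measurable (PiM B (\<lambda>_. count_space UNIV)) N2"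
  shows "indep_var N1 (\<lambda>\<omega>. h (R A \<omega>)) N2 (\<lambda>\<omega>. F (R B \<omega>))"
proof -
  have "indep_var (PiM A (\<lambda>_. count_space UNIV)) (R A) (PiM B (\<lambda>_. count_space UNIV)) (R B)"
    unfolding R_def[abs_def] by (rule indep_var_restrict[OF indep assms(1-3)])
  from indep_var_compose[OF this assms(4,5)] show ?thesis by (simp add: comp_def)
qed


definition "ps = 1 - \<alpha> / (1 + me)"
definition "pp = (me - \<alpha>) / (1 + me - \<alpha>)"
definition "qq = me / (1 + me)"
definition "aa = (1 - ps) * (1 - pp)"

lemma alpha_lt1: "\<alpha> < 1"
proof -
  have "\<mu> / (1 + \<mu>) < 1" using mu_pos by simp
  then show ?thesis using alpha_bound by linarith
qed

lemma alpha_lt_me: "\<alpha> < me"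
proof -
  have "\<alpha> * (1 + \<mu>) < \<mu>" using alpha_bound mu_pos by (simp add: field_simps)
  then show ?thesis unfolding me_def by (simp add: algebra_simps)
qed

lemma me_pos: "me > 0" using alpha_lt_me alpha_pos by linarith

lemma D1_pos: "1 + me > 0" using me_pos by linarith
lemma D2_pos: "1 + me - \<alpha> > 0" using alpha_lt_me by linarith

lemma one_minus_ps: "1 - ps = \<alpha> / (1 + me)"
  unfolding ps_def by simp

lemma one_minus_pp: "1 - pp = 1 / (1 + me - \<alpha>)"
proof -
  have n2: "1 + me - \<alpha> \<noteq> 0" using D2_pos by auto
  show ?thesis unfolding pp_def using n2 by (simp add: divide_simps)
qed

lemma ps_eq: "ps = (1 + me - \<alpha>) / (1 + me)"
proof -
  have "ps = ((1 + me) - \<alpha>) / (1 + me)" unfolding ps_def using D1_pos by (simp add: diff_divide_distrib)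
  then show ?thesis by simp
qed

lemma qq_eq: "qq = pp + aa"
proof -
  have n1: "1 + me \<noteq> 0" and n2: "1 + me - \<alpha> \<noteq> 0" using D1_pos D2_pos by auto
  have "aa = \<alpha> / ((1 + me) * (1 + me - \<alpha>))" unfolding aa_def one_minus_ps one_minus_pp by simp
  then show ?thesis unfolding qq_def pp_def using n1 n2
    by (simp add: divide_simps) (simp add: algebra_simps)
qed

lemma zmg0: "zmg_prob pi0 me 0 = ps"
proof -
  have n0: "me \<noteq> 0" and n1: "1 + me \<noteq> 0" using me_pos D1_pos by auto
  show ?thesis unfolding zmg_prob_def pi0_def ps_def using n0 n1
    by (simp add: divide_simps) (simp add: algebra_simps)
qed

lemma zmg1: "zmg_prob pi0 me (Suc 0) = qq * ps - ps * pp"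
proof -
  have n0: "me \<noteq> 0" and n1: "1 + me \<noteq> 0" and n2: "1 + me - \<alpha> \<noteq> 0" using me_pos D1_pos D2_pos by auto
  show ?thesis unfolding zmg_prob_def pi0_def ps_eq qq_def pp_def using n0 n1 n2
    by (simp add: divide_simps) (simp add: algebra_simps power2_eq_square)
qed

lemma zmgS: "zmg_prob pi0 me (Suc (Suc k)) = qq * zmg_prob pi0 me (Suc k)"
  using D1_pos unfolding zmg_prob_def qq_def by (simp add: field_simps)

definition "SS t n \<omega> = (\<Sum>i = 1..n. G t i \<omega>)"

lemma SS_R: "SS t n \<omega> = (\<lambda>y. \<Sum>i = 1..n. y (Thin t i)) (R (BS t n) \<omega>)"
  unfolding SS_def R_def by (intro sum.cong refl) (auto simp: BS_def inar_vars_def)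

lemma G_R: "G t i \<omega> = (\<lambda>y. y (Thin t i)) (R {Thin t i} \<omega>)"
  unfolding R_def by (simp add: inar_vars_def)

lemma eps_R: "eps t \<omega> = (\<lambda>y. y (inar_idx.Eps t)) (R {inar_idx.Eps t} \<omega>)"
  unfolding R_def by (simp add: inar_vars_def)

lemma indep_SS_G:
  assumes "t \<ge> 1"
  shows "indep_var (count_space UNIV) (SS t n) (count_space UNIV) (G t (Suc n))"
proof -
  have "indep_var (count_space UNIV) (\<lambda>\<omega>. (\<lambda>y. \<Sum>i = 1..n. y (Thin t i)) (R (BS t n) \<omega>))
     (count_space UNIV) (\<lambda>\<omega>. (\<lambda>y. y (Thin t (Suc n))) (R {Thin t (Suc n)} \<omega>))"
    using assms by (intro core_indep FS_meas comp_meas BS_sub) (auto simp: BS_def inar_index_set_def)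
  then show ?thesis unfolding SS_R[symmetric] G_R[symmetric] by simp
qed

definition "hS t n m = prob {\<omega>\<in>space M. SS t n \<omega> = m}"

lemma hS_0: "hS t 0 m = (if m = 0 then 1 else 0)"
  unfolding hS_def SS_def by (auto simp: prob_space)

lemma hS_Suc:
  assumes "t \<ge> 1"
  shows "hS t (Suc n) m = (\<Sum>k\<le>m. hS t n k * zmg_prob pi0 me (m - k))"
proof -
  have "SS t (Suc n) \<omega> = SS t n \<omega> + G t (Suc n) \<omega>" for \<omega>
    unfolding SS_def by simp
  then have "hS t (Suc n) m = prob {\<omega>\<in>space M. SS t n \<omega> + G t (Suc n) \<omega> = m}"
    unfolding hS_def by simp
  also have "\<dots> = (\<Sum>k\<le>m. hS t n k * prob {\<omega>\<in>space M. G t (Suc n) \<omega> = m - k})"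
    unfolding hS_def by (rule conv_indep[OF indep_SS_G[OF assms]])
  also have "\<dots> = (\<Sum>k\<le>m. hS t n k * zmg_prob pi0 me (m - k))"
    using assms by (simp add: dist_G)
  finally show ?thesis .
qed

lemma hS_DD:
  assumes "t \<ge> 1"
  shows "hS t n m = DD ps aa pp n m"
proof -
  have h0: "hS t i 0 = ps ^ i" for i
    by (induction i) (simp_all add: hS_0 hS_Suc[OF assms] zmg0)
  show ?thesis
  proof (rule rec_unique[where q=qq and c=ps and p=pp])
    show "hS t 0 m = DD ps aa pp 0 m" for m by (simp add: hS_0 DD_0)
    show "hS t (Suc i) 0 = DD ps aa pp (Suc i) 0" for i by (simp add: h0 DD_def)
    show "hS t (Suc i) (Suc m) = qq * hS t (Suc i) m + ps * (hS t i (Suc m) - pp * hS t i m)" for i m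
      unfolding hS_Suc[OF assms]
      by (rule conv_rec[where h="hS t i" and g="zmg_prob pi0 me"]) (simp_all add: zmg0 zmg1 zmgS)
    show "DD ps aa pp (Suc i) (Suc m) = qq * DD ps aa pp (Suc i) m + ps * (DD ps aa pp i (Suc m) - pp * DD ps aa pp i m)" for i m
      by (rule DD_rec[OF qq_eq])
  qed
qed

definition "TT t n \<omega> = SS t n \<omega> + eps t \<omega>"

lemma TT_R: "TT t n \<omega> = (\<lambda>y. (\<Sum>i = 1..n. y (Thin t i)) + y (inar_idx.Eps t)) (R (BT t n) \<omega>)"
  unfolding TT_def SS_def R_def by (auto simp: BT_def BS_def inar_vars_def intro!: sum.cong)

lemma indep_SS_eps:
  assumes "t \<ge> 1"
  shows "indep_var (count_space UNIV) (SS t n) (count_space UNIV) (eps t)"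
proof -
  have "indep_var (count_space UNIV) (\<lambda>\<omega>. (\<lambda>y. \<Sum>i = 1..n. y (Thin t i)) (R (BS t n) \<omega>))
     (count_space UNIV) (\<lambda>\<omega>. (\<lambda>y. y (inar_idx.Eps t)) (R {inar_idx.Eps t} \<omega>))"
    using assms by (intro core_indep FS_meas comp_meas BS_sub) (auto simp: BS_def inar_index_set_def)
  then show ?thesis unfolding SS_R[symmetric] eps_R[symmetric] by simp
qed

lemma dist_TT:
  assumes "t \<ge> 1"
  shows "prob {\<omega>\<in>space M. TT t n \<omega> = j} = (\<Sum>k\<le>j. DD ps aa pp n k * geo_prob me (j - k))"
proof -
  have "prob {\<omega>\<in>space M. TT t n \<omega> = j} = prob {\<omega>\<in>space M. SS t n \<omega> + eps t \<omega> = j}"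
    unfolding TT_def by simp
  also have "\<dots> = (\<Sum>k\<le>j. hS t n k * prob {\<omega>\<in>space M. eps t \<omega> = j - k})"
    unfolding hS_def by (rule conv_indep[OF indep_SS_eps[OF assms]])
  finally show ?thesis using assms by (simp add: dist_eps hS_DD)
qed

lemma Past_BT_disj: "Past s \<inter> BT (Suc s) n = {}"
  by (auto simp: Past_def BT_def BS_def)

lemma indep_past_TT:
  assumes h: "h \<in> measurable (PiM (Past s) (\<lambda>_. count_space UNIV)) N"
  shows "indep_var N (\<lambda>\<omega>. h (R (Past s) \<omega>)) (count_space UNIV) (TT (Suc s) n)"
proof -
  have "indep_var N (\<lambda>\<omega>. h (R (Past s) \<omega>)) (count_space UNIV)
      (\<lambda>\<omega>. (\<lambda>y. (\<Sum>i = 1..n. y (Thin (Suc s) i)) + y (inar_idx.Eps (Suc s))) (R (BT (Suc s) n) \<omega>))"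
    by (intro core_indep h FT_meas Past_BT_disj Past_sub BT_sub) auto
  then show ?thesis unfolding TT_R[symmetric] .
qed

lemma indep_past_TT_gen:
  assumes h: "h \<in> measurable (PiM (Past s) (\<lambda>_. count_space UNIV)) N"
    and F: "F \<in> measurable (count_space UNIV) N2"
  shows "indep_var N (\<lambda>\<omega>. h (R (Past s) \<omega>)) N2 (\<lambda>\<omega>. F (TT (Suc s) n \<omega>))"
proof -
  have "indep_var N (\<lambda>\<omega>. h (R (Past s) \<omega>)) N2
      (\<lambda>\<omega>. (\<lambda>y. F ((\<Sum>i = 1..n. y (Thin (Suc s) i)) + y (inar_idx.Eps (Suc s)))) (R (BT (Suc s) n) \<omega>))"
    by (intro core_indep h measurable_compose[OF FT_meas F] Past_BT_disj Past_sub BT_sub) auto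
  then show ?thesis unfolding TT_R[symmetric] .
qed

lemma indep_X_TT: "indep_var (count_space UNIV) (X s) (count_space UNIV) (TT (Suc s) n)"
  by (rule indep_var_cong'[OF indep_past_TT[OF fX_meas[OF order_refl]]]) (use X_fX_R[of _ s "Past s"] in auto)

lemma X_Suc_TT: "\<omega> \<in> space M \<Longrightarrow> X (Suc s) \<omega> = TT (Suc s) (X s \<omega>) \<omega>"
  using recursion[of "Suc s" \<omega>] by (simp add: TT_def SS_def)

lemma joint_X:
  "prob {\<omega>\<in>space M. X (Suc s) \<omega> = j \<and> X s \<omega> = i} = prob {\<omega>\<in>space M. X s \<omega> = i} * prob {\<omega>\<in>space M. TT (Suc s) i \<omega> = j}"
proof -
  have "{\<omega>\<in>space M. X (Suc s) \<omega> = j \<and> X s \<omega> = i} = {\<omega>\<in>space M. X s \<omega> \<in> {i} \<and> TT (Suc s) i \<omega> \<in> {j}}"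
    using X_Suc_TT by auto
  then have "prob {\<omega>\<in>space M. X (Suc s) \<omega> = j \<and> X s \<omega> = i} = \<P>(\<omega> in M. X s \<omega> \<in> {i} \<and> TT (Suc s) i \<omega> \<in> {j})"
    by simp
  also have "\<dots> = \<P>(\<omega> in M. X s \<omega> \<in> {i}) * \<P>(\<omega> in M. TT (Suc s) i \<omega> \<in> {j})"
    by (rule prob_indep_random_variable[OF indep_X_TT]) auto
  finally show ?thesis by simp
qed

lemma geo_pos: "m > 0 \<Longrightarrow> geo_prob m k > 0"
  unfolding geo_prob_def by simp

lemma trans_prob:
  "cond_prob M (\<lambda>\<omega>. X (Suc s) \<omega> = j) (\<lambda>\<omega>. X s \<omega> = i) = prob {\<omega>\<in>space M. TT (Suc s) i \<omega> = j}"
proof -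
  have "prob {\<omega>\<in>space M. X s \<omega> = i} > 0" using dist_X geo_pos mu_pos by simp
  then show ?thesis unfolding cond_prob_def using joint_X by simp
qed

lemma geo_shift:
  assumes "m \<le> j" "me > 0"
  shows "geo_prob me j * (1 + 1 / me) ^ m = geo_prob me (j - m)"
proof -
  obtain r where j: "j = m + r" using assms(1) le_Suc_ex by blast
  have e1: "1 + 1 / me = (1 + me) / me" using assms(2) by (simp add: field_simps)
  have e2: "geo_prob me (m + r) = (me ^ m / (1 + me) ^ m) * geo_prob me r"
    unfolding geo_prob_def by (simp add: power_add)
  have e3: "(me ^ m / (1 + me) ^ m) * ((1 + me) / me) ^ m = 1"
    using assms(2) by (simp add: power_divide)
  have "geo_prob me (m + r) * ((1 + me) / me) ^ m = ((me ^ m / (1 + me) ^ m) * ((1 + me) / me) ^ m) * geo_prob me r"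
    unfolding e2 by (simp add: algebra_simps)
  then show ?thesis unfolding j e1 e3 by simp
qed

lemma part1_zero:
  assumes "t \<ge> 1"
  shows "cond_prob M (\<lambda>\<omega>. X t \<omega> = j) (\<lambda>\<omega>. X (t - 1) \<omega> = 0) = geo_prob me j"
proof -
  obtain s where t: "t = Suc s" using assms by (cases t) auto
  have "TT t 0 \<omega> = eps t \<omega>" for \<omega> by (simp add: TT_def SS_def)
  then show ?thesis using trans_prob[of s j 0] t dist_eps assms by simp
qed

lemma part1_pos:
  assumes "t \<ge> 1" "i \<ge> 1"
  shows "cond_prob M (\<lambda>\<omega>. X t \<omega> = j) (\<lambda>\<omega>. X (t - 1) \<omega> = i)
    = geo_prob me j * (ps ^ i + (\<Sum>m = 1..j. \<Sum>l = 1..m.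
         (1 + 1 / me) ^ m * (real ((i + l - 1) choose l) * ps ^ i * (1 - ps) ^ l)
           * (real ((m - 1) choose (l - 1)) * pp ^ (m - l) * (1 - pp) ^ l)))"
proof -
  obtain s where t: "t = Suc s" using assms by (cases t) auto
  have inner: "(\<Sum>l = 1..m. (1 + 1 / me) ^ m * (real ((i + l - 1) choose l) * ps ^ i * (1 - ps) ^ l)
           * (real ((m - 1) choose (l - 1)) * pp ^ (m - l) * (1 - pp) ^ l))
        = (1 + 1 / me) ^ m * DD ps aa pp i m" if "m \<ge> 1" for m
    unfolding DD_explicit[OF that] sum_distrib_left aa_def power_mult_distrib
    by (intro sum.cong refl) (simp add: algebra_simps)
  have s1: "(\<Sum>m = 1..j. \<Sum>l = 1..m.
         (1 + 1 / me) ^ m * (real ((i + l - 1) choose l) * ps ^ i * (1 - ps) ^ l)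
           * (real ((m - 1) choose (l - 1)) * pp ^ (m - l) * (1 - pp) ^ l))
      = (\<Sum>m = 1..j. (1 + 1 / me) ^ m * DD ps aa pp i m)"
  proof (rule sum.cong[OF refl])
    fix m assume "m \<in> {1..j}"
    then show "(\<Sum>l = 1..m. (1 + 1 / me) ^ m * (real ((i + l - 1) choose l) * ps ^ i * (1 - ps) ^ l)
           * (real ((m - 1) choose (l - 1)) * pp ^ (m - l) * (1 - pp) ^ l)) = (1 + 1 / me) ^ m * DD ps aa pp i m"
      by (intro inner) auto
  qed
  have s2: "geo_prob me j * (\<Sum>m = 1..j. (1 + 1 / me) ^ m * DD ps aa pp i m) = (\<Sum>m = 1..j. DD ps aa pp i m * geo_prob me (j - m))"
    unfolding sum_distrib_left
  proof (rule sum.cong[OF refl])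
    fix m assume "m \<in> {1..j}"
    then have "geo_prob me j * (1 + 1 / me) ^ m = geo_prob me (j - m)" using geo_shift me_pos by auto
    then show "geo_prob me j * ((1 + 1 / me) ^ m * DD ps aa pp i m) = DD ps aa pp i m * geo_prob me (j - m)"
      by (metis mult.assoc mult.commute)
  qed
  have "geo_prob me j * (ps ^ i + (\<Sum>m = 1..j. \<Sum>l = 1..m.
         (1 + 1 / me) ^ m * (real ((i + l - 1) choose l) * ps ^ i * (1 - ps) ^ l)
           * (real ((m - 1) choose (l - 1)) * pp ^ (m - l) * (1 - pp) ^ l)))
      = DD ps aa pp i 0 * geo_prob me (j - 0) + (\<Sum>m = 1..j. DD ps aa pp i m * geo_prob me (j - m))"
    unfolding s1 distrib_left s2 by (simp add: DD_def)
  also have "\<dots> = (\<Sum>m\<le>j. DD ps aa pp i m * geo_prob me (j - m))"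
    by (simp add: atMost_atLeast0 sum.atLeast_Suc_atMost)
  finally show ?thesis
    using trans_prob[of s j i] dist_TT[of t i j] t by simp
qed

lemma cs_borel: "(f::nat \<Rightarrow> real) \<in> measurable (count_space UNIV) borel"
  by simp

lemma one_minus_pi0: "1 - pi0 = \<alpha> / me"
  unfolding pi0_def by simp

lemma mom_G:
  assumes "t \<ge> 1" "i \<ge> 1"
  shows "integrable M (\<lambda>\<omega>. real (G t i \<omega>))" "(\<integral>\<omega>. real (G t i \<omega>) \<partial>M) = \<alpha>"
    "integrable M (\<lambda>\<omega>. (real (G t i \<omega>))\<^sup>2)" "(\<integral>\<omega>. (real (G t i \<omega>))\<^sup>2 \<partial>M) = \<alpha> * (1 + 2 * me)"
proof -
  have s1: "(\<lambda>k. real k * prob {\<omega>\<in>space M. G t i \<omega> = k}) sums \<alpha>"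
  proof -
    have "(\<lambda>k. real k * zmg_prob pi0 me k) sums ((1 - pi0) * me)" by (rule zmg_mom1[OF me_pos])
    moreover have "(1 - pi0) * me = \<alpha>" unfolding one_minus_pi0 using me_pos by simp
    ultimately show ?thesis using assms by (simp add: dist_G)
  qed
  have s2: "(\<lambda>k. (real k)\<^sup>2 * prob {\<omega>\<in>space M. G t i \<omega> = k}) sums (\<alpha> * (1 + 2 * me))"
  proof -
    have "(\<lambda>k. (real k)\<^sup>2 * zmg_prob pi0 me k) sums ((1 - pi0) * (me * (1 + 2 * me)))" by (rule zmg_mom2[OF me_pos])
    moreover have "(1 - pi0) * (me * (1 + 2 * me)) = \<alpha> * (1 + 2 * me)" unfolding one_minus_pi0 using me_pos by simp
    ultimately show ?thesis using assms by (simp add: dist_G)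
  qed
  show "integrable M (\<lambda>\<omega>. real (G t i \<omega>))" "(\<integral>\<omega>. real (G t i \<omega>) \<partial>M) = \<alpha>"
    using moment_nat(2,3)[where f="\<lambda>k. real k", OF rv_G _ s1] by auto
  show "integrable M (\<lambda>\<omega>. (real (G t i \<omega>))\<^sup>2)" "(\<integral>\<omega>. (real (G t i \<omega>))\<^sup>2 \<partial>M) = \<alpha> * (1 + 2 * me)"
    using moment_nat(2,3)[where f="\<lambda>k. (real k)\<^sup>2", OF rv_G _ s2] by auto
qed

lemma mom_eps:
  assumes "t \<ge> 1"
  shows "integrable M (\<lambda>\<omega>. real (eps t \<omega>))" "(\<integral>\<omega>. real (eps t \<omega>) \<partial>M) = me"
    "integrable M (\<lambda>\<omega>. (real (eps t \<omega>))\<^sup>2)" "(\<integral>\<omega>. (real (eps t \<omega>))\<^sup>2 \<partial>M) = me * (1 + 2 * me)"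
proof -
  have s1: "(\<lambda>k. real k * prob {\<omega>\<in>space M. eps t \<omega> = k}) sums me"
    using geo_mom1[OF me_pos] assms by (simp add: dist_eps)
  have s2: "(\<lambda>k. (real k)\<^sup>2 * prob {\<omega>\<in>space M. eps t \<omega> = k}) sums (me * (1 + 2 * me))"
    using geo_mom2[OF me_pos] assms by (simp add: dist_eps)
  show "integrable M (\<lambda>\<omega>. real (eps t \<omega>))" "(\<integral>\<omega>. real (eps t \<omega>) \<partial>M) = me"
    using moment_nat(2,3)[where f="\<lambda>k. real k", OF rv_eps _ s1] by auto
  show "integrable M (\<lambda>\<omega>. (real (eps t \<omega>))\<^sup>2)" "(\<integral>\<omega>. (real (eps t \<omega>))\<^sup>2 \<partial>M) = me * (1 + 2 * me)"
    using moment_nat(2,3)[where f="\<lambda>k. (real k)\<^sup>2", OF rv_eps _ s2] by auto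
qed

lemma mom_X:
  shows "integrable M (\<lambda>\<omega>. real (X t \<omega>))" "(\<integral>\<omega>. real (X t \<omega>) \<partial>M) = \<mu>"
    "integrable M (\<lambda>\<omega>. (real (X t \<omega>))\<^sup>2)" "(\<integral>\<omega>. (real (X t \<omega>))\<^sup>2 \<partial>M) = \<mu> * (1 + 2 * \<mu>)"
    "(\<integral>\<^sup>+\<omega>. ennreal (real (X t \<omega>)) \<partial>M) = ennreal \<mu>"
proof -
  have s1: "(\<lambda>k. real k * prob {\<omega>\<in>space M. X t \<omega> = k}) sums \<mu>"
    using geo_mom1[OF mu_pos] by (simp add: dist_X)
  have s2: "(\<lambda>k. (real k)\<^sup>2 * prob {\<omega>\<in>space M. X t \<omega> = k}) sums (\<mu> * (1 + 2 * \<mu>))"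
    using geo_mom2[OF mu_pos] by (simp add: dist_X)
  show "integrable M (\<lambda>\<omega>. real (X t \<omega>))" "(\<integral>\<omega>. real (X t \<omega>) \<partial>M) = \<mu>"
    "(\<integral>\<^sup>+\<omega>. ennreal (real (X t \<omega>)) \<partial>M) = ennreal \<mu>"
    using moment_nat[where f="\<lambda>k. real k", OF rv_X _ s1] by auto
  show "integrable M (\<lambda>\<omega>. (real (X t \<omega>))\<^sup>2)" "(\<integral>\<omega>. (real (X t \<omega>))\<^sup>2 \<partial>M) = \<mu> * (1 + 2 * \<mu>)"
    using moment_nat(2,3)[where f="\<lambda>k. (real k)\<^sup>2", OF rv_X _ s2] by auto
qed

lemma indep_TT_G:
  assumes "t \<ge> 1"
  shows "indep_var borel (\<lambda>\<omega>. real (TT t n \<omega>)) borel (\<lambda>\<omega>. real (G t (Suc n) \<omega>))"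
proof -
  have "indep_var borel (\<lambda>\<omega>. (\<lambda>y. real ((\<Sum>i = 1..n. y (Thin t i)) + y (inar_idx.Eps t))) (R (BT t n) \<omega>))
     borel (\<lambda>\<omega>. (\<lambda>y. real (y (Thin t (Suc n)))) (R {Thin t (Suc n)} \<omega>))"
  proof (rule core_indep)
    show "BT t n \<inter> {Thin t (Suc n)} = {}" by (auto simp: BT_def BS_def)
    show "BT t n \<subseteq> inar_index_set" using assms by (rule BT_sub)
    show "{Thin t (Suc n)} \<subseteq> inar_index_set" using assms by (auto simp: inar_index_set_def)
    show "(\<lambda>y. real ((\<Sum>i = 1..n. y (Thin t i)) + y (inar_idx.Eps t))) \<in> borel_measurable (PiM (BT t n) (\<lambda>_. count_space UNIV))"
      by (rule measurable_compose[OF FT_meas cs_borel])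
    show "(\<lambda>y. real (y (Thin t (Suc n)))) \<in> borel_measurable (PiM {Thin t (Suc n)} (\<lambda>_. count_space UNIV))"
      by (rule measurable_compose[OF comp_meas cs_borel]) simp
  qed
  then show ?thesis unfolding TT_R[symmetric] G_R[symmetric] .
qed

lemma TT_Suc: "TT t (Suc n) \<omega> = TT t n \<omega> + G t (Suc n) \<omega>"
  unfolding TT_def SS_def by simp

lemma mom_TT:
  assumes "t \<ge> 1"
  shows "integrable M (\<lambda>\<omega>. real (TT t n \<omega>)) \<and> (\<integral>\<omega>. real (TT t n \<omega>) \<partial>M) = real n * \<alpha> + me
    \<and> integrable M (\<lambda>\<omega>. (real (TT t n \<omega>))\<^sup>2)
    \<and> (\<integral>\<omega>. (real (TT t n \<omega>))\<^sup>2 \<partial>M) = real n * \<alpha> * (1 + 2 * me - \<alpha>) + me * (1 + me) + (real n * \<alpha> + me)\<^sup>2"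
proof (induction n)
  case 0
  have e: "TT t 0 \<omega> = eps t \<omega>" for \<omega> by (simp add: TT_def SS_def)
  show ?case using mom_eps[OF assms] unfolding e by (simp add: power2_eq_square algebra_simps)
next
  case (Suc n)
  define T where "T \<omega> = real (TT t n \<omega>)" for \<omega>
  define g where "g \<omega> = real (G t (Suc n) \<omega>)" for \<omega>
  have iT: "integrable M T" and eT: "(\<integral>\<omega>. T \<omega> \<partial>M) = real n * \<alpha> + me"
    and iT2: "integrable M (\<lambda>\<omega>. (T \<omega>)\<^sup>2)"
    and eT2: "(\<integral>\<omega>. (T \<omega>)\<^sup>2 \<partial>M) = real n * \<alpha> * (1 + 2 * me - \<alpha>) + me * (1 + me) + (real n * \<alpha> + me)\<^sup>2"
    using Suc.IH unfolding T_def by auto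
  have ig: "integrable M g" and eg: "(\<integral>\<omega>. g \<omega> \<partial>M) = \<alpha>"
    and ig2: "integrable M (\<lambda>\<omega>. (g \<omega>)\<^sup>2)" and eg2: "(\<integral>\<omega>. (g \<omega>)\<^sup>2 \<partial>M) = \<alpha> * (1 + 2 * me)"
    using mom_G[OF assms, of "Suc n"] unfolding g_def by auto
  have ind: "indep_var borel T borel g" using indep_TT_G[OF assms, of n] unfolding T_def[abs_def] g_def[abs_def] .
  have iTg: "integrable M (\<lambda>\<omega>. T \<omega> * g \<omega>)" by (rule indep_var_integrable[OF ind iT ig])
  have eTg: "(\<integral>\<omega>. T \<omega> * g \<omega> \<partial>M) = (real n * \<alpha> + me) * \<alpha>"
    using indep_var_lebesgue_integral[OF ind iT ig] eT eg by simp
  have r: "real (TT t (Suc n) \<omega>) = T \<omega> + g \<omega>" for \<omega> unfolding T_def g_def TT_Suc by simp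
  have r2: "(real (TT t (Suc n) \<omega>))\<^sup>2 = (T \<omega>)\<^sup>2 + 2 * (T \<omega> * g \<omega>) + (g \<omega>)\<^sup>2" for \<omega>
    unfolding r by (simp add: power2_eq_square algebra_simps)
  have i1: "integrable M (\<lambda>\<omega>. real (TT t (Suc n) \<omega>))" unfolding r using iT ig by simp
  have e1: "(\<integral>\<omega>. real (TT t (Suc n) \<omega>) \<partial>M) = real (Suc n) * \<alpha> + me"
    unfolding r using iT ig eT eg by (simp add: algebra_simps)
  have i2: "integrable M (\<lambda>\<omega>. (real (TT t (Suc n) \<omega>))\<^sup>2)" unfolding r2 using iT2 iTg ig2 by simp
  have "(\<integral>\<omega>. (real (TT t (Suc n) \<omega>))\<^sup>2 \<partial>M) = (\<integral>\<omega>. (T \<omega>)\<^sup>2 \<partial>M) + 2 * (\<integral>\<omega>. T \<omega> * g \<omega> \<partial>M) + (\<integral>\<omega>. (g \<omega>)\<^sup>2 \<partial>M)"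
    unfolding r2 using iT2 iTg ig2 by simp
  also have "\<dots> = real (Suc n) * \<alpha> * (1 + 2 * me - \<alpha>) + me * (1 + me) + (real (Suc n) * \<alpha> + me)\<^sup>2"
    unfolding eT2 eTg eg2 by (simp add: power2_eq_square algebra_simps)
  finally show ?case using i1 e1 i2 by simp
qed

lemma ev_X: "{\<omega>\<in>space M. X s \<omega> = i} \<in> events"
  using measurable_sets[OF rv_X, of "{i}" s] by (simp add: vimage_def Int_def conj_commute)

lemma cond_TT:
  fixes \<phi> :: "nat \<Rightarrow> real"
  assumes int: "integrable M (\<lambda>\<omega>. \<phi> (TT (Suc s) i \<omega>))"
  shows "(\<integral>\<omega>. \<phi> (X (Suc s) \<omega>) * indicator {\<omega>\<in>space M. X s \<omega> = i} \<omega> \<partial>M)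
       = (\<integral>\<omega>. \<phi> (TT (Suc s) i \<omega>) \<partial>M) * prob {\<omega>\<in>space M. X s \<omega> = i}"
proof -
  define A where "A = {\<omega>\<in>space M. X s \<omega> = i}"
  have A: "A \<in> events" unfolding A_def by (rule ev_X)
  have ind0: "indep_var borel ((\<lambda>n. if n = i then 1 else 0 :: real) \<circ> X s) borel (\<phi> \<circ> TT (Suc s) i)"
    by (rule indep_var_compose[OF indep_X_TT cs_borel cs_borel])
  have ind: "indep_var borel (\<lambda>\<omega>. indicator A \<omega> :: real) borel (\<lambda>\<omega>. \<phi> (TT (Suc s) i \<omega>))"
    by (rule indep_var_cong'[OF ind0]) (auto simp: A_def indicator_def)
  have iA: "integrable M (\<lambda>\<omega>. indicator A \<omega> :: real)"
    using A by (intro integrable_real_indicator) (simp_all add: less_top[symmetric])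
  have "(\<integral>\<omega>. \<phi> (X (Suc s) \<omega>) * indicator A \<omega> \<partial>M) = (\<integral>\<omega>. indicator A \<omega> * \<phi> (TT (Suc s) i \<omega>) \<partial>M)"
    by (rule Bochner_Integration.integral_cong[OF refl]) (auto simp: A_def indicator_def X_Suc_TT)
  also have "\<dots> = (\<integral>\<omega>. indicator A \<omega> \<partial>M) * (\<integral>\<omega>. \<phi> (TT (Suc s) i \<omega>) \<partial>M)"
    by (rule indep_var_lebesgue_integral[OF ind iA int])
  also have "(\<integral>\<omega>. indicator A \<omega> \<partial>M) = prob A"
    using A by simp
  finally show ?thesis unfolding A_def by simp
qed

lemma part2:
  "cond_expect_at M (\<lambda>\<omega>. real (X (t + 1) \<omega>)) (X t) i = \<alpha> * real i + (1 - \<alpha>) * \<mu>"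
proof -
  have m: "integrable M (\<lambda>\<omega>. real (TT (Suc t) i \<omega>))" "(\<integral>\<omega>. real (TT (Suc t) i \<omega>) \<partial>M) = real i * \<alpha> + me"
    using mom_TT[of "Suc t" i] by auto
  have p: "prob {\<omega>\<in>space M. X t \<omega> = i} > 0" using dist_X geo_pos mu_pos by simp
  have "cond_expect_at M (\<lambda>\<omega>. real (X (t + 1) \<omega>)) (X t) i
      = (real i * \<alpha> + me) * prob {\<omega>\<in>space M. X t \<omega> = i} / prob {\<omega>\<in>space M. X t \<omega> = i}"
    unfolding cond_expect_at_def using cond_TT[where \<phi>="\<lambda>n. real n", OF m(1)] m(2) by simp
  also have "\<dots> = real i * \<alpha> + me" using p by simp
  finally show ?thesis by (simp add: me_def algebra_simps)
qed

lemma part3: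
  "cond_var_at M (\<lambda>\<omega>. real (X (t + 1) \<omega>)) (X t) i
     = (1 + 2 * \<mu>) * (1 - \<alpha>) * \<alpha> * real i + me * (1 + me)"
proof -
  define c where "c = real i * \<alpha> + me"
  have ce: "cond_expect_at M (\<lambda>\<omega>. real (X (t + 1) \<omega>)) (X t) i = c"
    unfolding part2 c_def me_def by (simp add: algebra_simps)
  have m: "integrable M (\<lambda>\<omega>. real (TT (Suc t) i \<omega>))" "(\<integral>\<omega>. real (TT (Suc t) i \<omega>) \<partial>M) = c"
    "integrable M (\<lambda>\<omega>. (real (TT (Suc t) i \<omega>))\<^sup>2)"
    "(\<integral>\<omega>. (real (TT (Suc t) i \<omega>))\<^sup>2 \<partial>M) = real i * \<alpha> * (1 + 2 * me - \<alpha>) + me * (1 + me) + c\<^sup>2"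
    using mom_TT[of "Suc t" i] unfolding c_def by auto
  have e: "(real n - c)\<^sup>2 = (real n)\<^sup>2 - 2 * c * real n + c\<^sup>2" for n
    by (simp add: power2_eq_square algebra_simps)
  have i2: "integrable M (\<lambda>\<omega>. (real (TT (Suc t) i \<omega>) - c)\<^sup>2)"
    unfolding e using m(1,3) by simp
  have v: "(\<integral>\<omega>. (real (TT (Suc t) i \<omega>) - c)\<^sup>2 \<partial>M) = real i * \<alpha> * (1 + 2 * me - \<alpha>) + me * (1 + me)"
    unfolding e using m by (simp add: prob_space power2_eq_square algebra_simps)
  have p: "prob {\<omega>\<in>space M. X t \<omega> = i} > 0" using dist_X geo_pos mu_pos by simp
  have cv: "cond_var_at M (\<lambda>\<omega>. real (X (t + 1) \<omega>)) (X t) i = cond_expect_at M (\<lambda>\<omega>. (real (X (t + 1) \<omega>) - c)\<^sup>2) (X t) i"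
    by (simp only: cond_var_at_def ce)
  have "cond_var_at M (\<lambda>\<omega>. real (X (t + 1) \<omega>)) (X t) i = real i * \<alpha> * (1 + 2 * me - \<alpha>) + me * (1 + me)"
    unfolding cv cond_expect_at_def
    using cond_TT[where \<phi>="\<lambda>n. (real n - c)\<^sup>2", OF i2] v p by simp
  also have "\<dots> = (1 + 2 * \<mu>) * (1 - \<alpha>) * \<alpha> * real i + me * (1 + me)"
    unfolding me_def by (simp add: algebra_simps)
  finally show ?thesis .
qed

lemma rv_TT: "TT t n \<in> measurable M (count_space UNIV)"
proof -
  have "(\<lambda>\<omega>. (\<Sum>i = 1..n. G t i \<omega>) + eps t \<omega>) \<in> measurable M (count_space UNIV)"
    by (intro meas_nat_plus meas_nat_sum rv_G rv_eps) auto
  then show ?thesis unfolding TT_def[abs_def] SS_def .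
qed

lemma indep_H:
  assumes "t \<le> s"
  shows "indep_var borel (\<lambda>\<omega>. indicator {\<omega>\<in>space M. X s \<omega> = i} \<omega> * real (X t \<omega>)) borel (\<lambda>\<omega>. real (TT (Suc s) i \<omega>))"
proof -
  define h where "h y = (if fX s y = i then 1 else 0) * real (fX t y)" for y :: "inar_idx \<Rightarrow> nat"
  have m1: "(\<lambda>y. (if fX s y = i then 1 else 0) :: real) \<in> borel_measurable (PiM (Past s) (\<lambda>_. count_space UNIV))"
    using measurable_compose[OF fX_meas[OF order_refl] cs_borel[of "\<lambda>n. if n = i then 1 else 0"]] by simp
  have m2: "(\<lambda>y. real (fX t y)) \<in> borel_measurable (PiM (Past s) (\<lambda>_. count_space UNIV))"
    using measurable_compose[OF fX_meas[OF Past_mono[OF assms]] cs_borel[of "\<lambda>n. real n"]] by simp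
  have hm: "h \<in> borel_measurable (PiM (Past s) (\<lambda>_. count_space UNIV))"
    unfolding h_def[abs_def] using m1 m2 by (rule borel_measurable_times)
  have "indep_var borel (\<lambda>\<omega>. h (R (Past s) \<omega>)) borel (\<lambda>\<omega>. real (TT (Suc s) i \<omega>))"
    by (rule indep_past_TT_gen[OF hm cs_borel])
  then show ?thesis
  proof (rule indep_var_cong')
    fix \<omega> assume w: "\<omega> \<in> space M"
    have "X s \<omega> = fX s (R (Past s) \<omega>)" "X t \<omega> = fX t (R (Past s) \<omega>)"
      using X_fX_R[OF w order_refl] X_fX_R[OF w Past_mono[OF assms]] by auto
    then show "h (R (Past s) \<omega>) = indicator {\<omega>\<in>space M. X s \<omega> = i} \<omega> * real (X t \<omega>)"
      using w by (simp add: h_def indicator_def)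
  qed simp
qed

lemma nn_ind_sum:
  fixes F :: "nat \<Rightarrow> 'a \<Rightarrow> ennreal"
  assumes Fm: "\<And>i. F i \<in> borel_measurable M"
  shows "(\<Sum>i. \<integral>\<^sup>+\<omega>. F i \<omega> * indicator {\<omega>\<in>space M. X s \<omega> = i} \<omega> \<partial>M) = (\<integral>\<^sup>+\<omega>. F (X s \<omega>) \<omega> \<partial>M)"
proof -
  have "(\<Sum>i. \<integral>\<^sup>+\<omega>. F i \<omega> * indicator {\<omega>\<in>space M. X s \<omega> = i} \<omega> \<partial>M)
      = (\<integral>\<^sup>+\<omega>. (\<Sum>i. F i \<omega> * indicator {\<omega>\<in>space M. X s \<omega> = i} \<omega>) \<partial>M)"
    using Fm ev_X by (intro nn_integral_suminf[symmetric]) auto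
  also have "\<dots> = (\<integral>\<^sup>+\<omega>. F (X s \<omega>) \<omega> \<partial>M)"
  proof (rule nn_integral_cong)
    fix \<omega> assume w: "\<omega> \<in> space M"
    have "(\<Sum>i. F i \<omega> * indicator {\<omega>\<in>space M. X s \<omega> = i} \<omega>) = (\<Sum>i\<in>{X s \<omega>}. F i \<omega> * indicator {\<omega>\<in>space M. X s \<omega> = i} \<omega>)"
      by (rule suminf_finite) (auto simp: indicator_def)
    then show "(\<Sum>i. F i \<omega> * indicator {\<omega>\<in>space M. X s \<omega> = i} \<omega>) = F (X s \<omega>) \<omega>" using w by simp
  qed
  finally show ?thesis .
qed

lemma step_corr:
  assumes "t \<le> s"
  shows "(\<integral>\<^sup>+\<omega>. ennreal (real (X (Suc s) \<omega>) * real (X t \<omega>)) \<partial>M)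
     = ennreal \<alpha> * (\<integral>\<^sup>+\<omega>. ennreal (real (X s \<omega>) * real (X t \<omega>)) \<partial>M) + ennreal me * (\<integral>\<^sup>+\<omega>. ennreal (real (X t \<omega>)) \<partial>M)"
proof -
  define A where "A i = {\<omega>\<in>space M. X s \<omega> = i}" for i
  define Z where "Z \<omega> = real (X t \<omega>)" for \<omega>
  define c where "c i = (\<integral>\<omega>. indicator (A i) \<omega> * Z \<omega> \<partial>M)" for i
  have Zm: "Z \<in> borel_measurable M" unfolding Z_def[abs_def] using measurable_compose[OF rv_X cs_borel] by simp
  have Zi: "integrable M Z" unfolding Z_def using mom_X(1) .
  have Z0: "0 \<le> Z \<omega>" for \<omega> by (simp add: Z_def)
  have Hi: "integrable M (\<lambda>\<omega>. indicator (A i) \<omega> * Z \<omega>)" for i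
    using integrable_mult_indicator[OF _ Zi, of "A i"] ev_X by (simp add: A_def)
  have c0: "0 \<le> c i" for i unfolding c_def by (intro integral_nonneg_AE) (simp add: Z0)
  have Tm: "(\<lambda>\<omega>. real (TT (Suc s) i \<omega>)) \<in> borel_measurable M" for i
    using measurable_compose[OF rv_TT cs_borel] by simp
  have Xm: "(\<lambda>\<omega>. real (X n \<omega>)) \<in> borel_measurable M" for n
    using measurable_compose[OF rv_X cs_borel] by simp
  have "(\<integral>\<^sup>+\<omega>. ennreal (real (X (Suc s) \<omega>) * real (X t \<omega>)) \<partial>M)
      = (\<integral>\<^sup>+\<omega>. ennreal (real (TT (Suc s) (X s \<omega>) \<omega>) * Z \<omega>) \<partial>M)"
    by (rule nn_integral_cong) (simp add: X_Suc_TT Z_def)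
  also have "\<dots> = (\<Sum>i. \<integral>\<^sup>+\<omega>. ennreal (real (TT (Suc s) i \<omega>) * Z \<omega>) * indicator (A i) \<omega> \<partial>M)"
    unfolding A_def by (rule nn_ind_sum[symmetric]) (use Tm Zm in simp)
  also have "\<dots> = (\<Sum>i. ennreal ((real i * \<alpha> + me) * c i))"
  proof (rule arg_cong[where f=suminf], rule ext)
    fix i
    have ind: "indep_var borel (\<lambda>\<omega>. indicator (A i) \<omega> * Z \<omega>) borel (\<lambda>\<omega>. real (TT (Suc s) i \<omega>))"
      unfolding A_def Z_def by (rule indep_H[OF assms])
    have mT: "integrable M (\<lambda>\<omega>. real (TT (Suc s) i \<omega>))" "(\<integral>\<omega>. real (TT (Suc s) i \<omega>) \<partial>M) = real i * \<alpha> + me"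
      using mom_TT[of "Suc s" i] by auto
    have iP: "integrable M (\<lambda>\<omega>. indicator (A i) \<omega> * Z \<omega> * real (TT (Suc s) i \<omega>))"
      by (rule indep_var_integrable[OF ind Hi mT(1)])
    have eP: "(\<integral>\<omega>. indicator (A i) \<omega> * Z \<omega> * real (TT (Suc s) i \<omega>) \<partial>M) = c i * (real i * \<alpha> + me)"
      using indep_var_lebesgue_integral[OF ind Hi mT(1)] mT(2) unfolding c_def by simp
    have "(\<integral>\<^sup>+\<omega>. ennreal (real (TT (Suc s) i \<omega>) * Z \<omega>) * indicator (A i) \<omega> \<partial>M)
        = (\<integral>\<^sup>+\<omega>. ennreal (indicator (A i) \<omega> * Z \<omega> * real (TT (Suc s) i \<omega>)) \<partial>M)"
      by (rule nn_integral_cong) (simp add: indicator_def mult.commute)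
    also have "\<dots> = ennreal (\<integral>\<omega>. indicator (A i) \<omega> * Z \<omega> * real (TT (Suc s) i \<omega>) \<partial>M)"
      by (rule nn_integral_eq_integral[OF iP]) (simp add: Z0)
    finally show "(\<integral>\<^sup>+\<omega>. ennreal (real (TT (Suc s) i \<omega>) * Z \<omega>) * indicator (A i) \<omega> \<partial>M) = ennreal ((real i * \<alpha> + me) * c i)"
      using eP by (simp add: mult.commute)
  qed
  also have "\<dots> = (\<Sum>i. ennreal \<alpha> * ennreal (real i * c i) + ennreal me * ennreal (c i))"
  proof (rule arg_cong[where f=suminf], rule ext)
    fix i
    have eq: "(real i * \<alpha> + me) * c i = \<alpha> * (real i * c i) + me * c i" by (simp add: algebra_simps)
    have n1: "0 \<le> real i * c i" using c0[of i] by simp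
    have n2: "0 \<le> \<alpha> * (real i * c i)" using n1 alpha_pos by simp
    have n3: "0 \<le> me * c i" using c0[of i] me_pos by simp
    have e1: "ennreal ((real i * \<alpha> + me) * c i) = ennreal (\<alpha> * (real i * c i)) + ennreal (me * c i)"
      unfolding eq by (rule ennreal_plus[OF n2 n3])
    have e2: "ennreal (\<alpha> * (real i * c i)) = ennreal \<alpha> * ennreal (real i * c i)"
      by (rule ennreal_mult) (use alpha_pos n1 in auto)
    have e3: "ennreal (me * c i) = ennreal me * ennreal (c i)"
      by (rule ennreal_mult) (use me_pos c0[of i] in auto)
    show "ennreal ((real i * \<alpha> + me) * c i) = ennreal \<alpha> * ennreal (real i * c i) + ennreal me * ennreal (c i)"
      unfolding e1 e2 e3 ..
  qed
  also have "\<dots> = ennreal \<alpha> * (\<Sum>i. ennreal (real i * c i)) + ennreal me * (\<Sum>i. ennreal (c i))"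
    by (simp add: suminf_add[symmetric])
  also have "(\<Sum>i. ennreal (real i * c i)) = (\<integral>\<^sup>+\<omega>. ennreal (real (X s \<omega>) * real (X t \<omega>)) \<partial>M)"
  proof -
    have "(\<Sum>i. ennreal (real i * c i)) = (\<Sum>i. \<integral>\<^sup>+\<omega>. ennreal (real i * Z \<omega>) * indicator (A i) \<omega> \<partial>M)"
    proof (rule arg_cong[where f=suminf], rule ext)
      fix i
      have "(\<integral>\<^sup>+\<omega>. ennreal (real i * Z \<omega>) * indicator (A i) \<omega> \<partial>M) = (\<integral>\<^sup>+\<omega>. ennreal (real i * (indicator (A i) \<omega> * Z \<omega>)) \<partial>M)"
        by (rule nn_integral_cong) (simp add: indicator_def)
      also have "\<dots> = ennreal (\<integral>\<omega>. real i * (indicator (A i) \<omega> * Z \<omega>) \<partial>M)"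
        by (rule nn_integral_eq_integral) (simp_all add: Hi Z0)
      finally show "ennreal (real i * c i) = (\<integral>\<^sup>+\<omega>. ennreal (real i * Z \<omega>) * indicator (A i) \<omega> \<partial>M)"
        unfolding c_def by simp
    qed
    also have "\<dots> = (\<integral>\<^sup>+\<omega>. ennreal (real (X s \<omega>) * Z \<omega>) \<partial>M)"
      unfolding A_def by (rule nn_ind_sum) (use Zm in simp)
    finally show ?thesis unfolding Z_def .
  qed
  also have "(\<Sum>i. ennreal (c i)) = (\<integral>\<^sup>+\<omega>. ennreal (real (X t \<omega>)) \<partial>M)"
  proof -
    have "(\<Sum>i. ennreal (c i)) = (\<Sum>i. \<integral>\<^sup>+\<omega>. ennreal (Z \<omega>) * indicator (A i) \<omega> \<partial>M)"
    proof (rule arg_cong[where f=suminf], rule ext)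
      fix i
      have "(\<integral>\<^sup>+\<omega>. ennreal (Z \<omega>) * indicator (A i) \<omega> \<partial>M) = (\<integral>\<^sup>+\<omega>. ennreal (indicator (A i) \<omega> * Z \<omega>) \<partial>M)"
        by (rule nn_integral_cong) (simp add: indicator_def)
      also have "\<dots> = ennreal (c i)"
        unfolding c_def by (rule nn_integral_eq_integral) (simp_all add: Hi Z0)
      finally show "ennreal (c i) = (\<integral>\<^sup>+\<omega>. ennreal (Z \<omega>) * indicator (A i) \<omega> \<partial>M)" by simp
    qed
    also have "\<dots> = (\<integral>\<^sup>+\<omega>. ennreal (Z \<omega>) \<partial>M)"
      unfolding A_def by (rule nn_ind_sum[where F="\<lambda>i \<omega>. ennreal (Z \<omega>)"]) (use Zm in simp)
    finally show ?thesis unfolding Z_def .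
  qed
  finally show ?thesis .
qed

lemma corr_nn:
  "(\<integral>\<^sup>+\<omega>. ennreal (real (X (t + h) \<omega>) * real (X t \<omega>)) \<partial>M) = ennreal (\<alpha> ^ h * (\<mu> * (1 + \<mu>)) + \<mu>\<^sup>2)"
proof (induction h)
  case 0
  have s2: "(\<lambda>k. (real k)\<^sup>2 * prob {\<omega>\<in>space M. X t \<omega> = k}) sums (\<mu> * (1 + 2 * \<mu>))"
    using geo_mom2[OF mu_pos] by (simp add: dist_X)
  have "(\<integral>\<^sup>+\<omega>. ennreal ((real (X t \<omega>))\<^sup>2) \<partial>M) = ennreal (\<mu> * (1 + 2 * \<mu>))"
    using moment_nat(1)[where f="\<lambda>k. (real k)\<^sup>2", OF rv_X _ s2] by simp
  moreover have "\<mu> * (1 + 2 * \<mu>) = \<alpha> ^ 0 * (\<mu> * (1 + \<mu>)) + \<mu>\<^sup>2" by (simp add: power2_eq_square algebra_simps)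
  ultimately show ?case by (simp add: power2_eq_square)
next
  case (Suc h)
  have "(\<integral>\<^sup>+\<omega>. ennreal (real (X (t + Suc h) \<omega>) * real (X t \<omega>)) \<partial>M)
      = ennreal \<alpha> * (\<integral>\<^sup>+\<omega>. ennreal (real (X (t + h) \<omega>) * real (X t \<omega>)) \<partial>M) + ennreal me * (\<integral>\<^sup>+\<omega>. ennreal (real (X t \<omega>)) \<partial>M)"
    using step_corr[of t "t + h"] by simp
  also have "\<dots> = ennreal \<alpha> * ennreal (\<alpha> ^ h * (\<mu> * (1 + \<mu>)) + \<mu>\<^sup>2) + ennreal me * ennreal \<mu>"
    unfolding Suc.IH mom_X(5) ..
  also have "\<dots> = ennreal (\<alpha> * (\<alpha> ^ h * (\<mu> * (1 + \<mu>)) + \<mu>\<^sup>2) + me * \<mu>)"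
  proof -
    have n: "0 \<le> \<alpha> ^ h * (\<mu> * (1 + \<mu>)) + \<mu>\<^sup>2" using alpha_pos mu_pos by simp
    have a: "0 \<le> \<alpha>" "0 \<le> me" "0 \<le> \<mu>" using alpha_pos me_pos mu_pos by auto
    have n2: "0 \<le> \<alpha> * (\<alpha> ^ h * (\<mu> * (1 + \<mu>)) + \<mu>\<^sup>2)" "0 \<le> me * \<mu>" using n a by auto
    show ?thesis
      unfolding ennreal_plus[OF n2] ennreal_mult[OF a(1) n] ennreal_mult[OF a(2) a(3)] ..
  qed
  also have "\<alpha> * (\<alpha> ^ h * (\<mu> * (1 + \<mu>)) + \<mu>\<^sup>2) + me * \<mu> = \<alpha> ^ Suc h * (\<mu> * (1 + \<mu>)) + \<mu>\<^sup>2"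
    unfolding me_def by (simp add: power2_eq_square algebra_simps)
  finally show ?case .
qed

lemma corr_int:
  "integrable M (\<lambda>\<omega>. real (X (t + h) \<omega>) * real (X t \<omega>))"
  "(\<integral>\<omega>. real (X (t + h) \<omega>) * real (X t \<omega>) \<partial>M) = \<alpha> ^ h * (\<mu> * (1 + \<mu>)) + \<mu>\<^sup>2"
proof -
  have m: "(\<lambda>\<omega>. real (X (t + h) \<omega>) * real (X t \<omega>)) \<in> borel_measurable M"
    using measurable_compose[OF rv_X cs_borel] by simp
  have x0: "0 \<le> \<alpha> ^ h * (\<mu> * (1 + \<mu>)) + \<mu>\<^sup>2" using alpha_pos mu_pos by simp
  show "integrable M (\<lambda>\<omega>. real (X (t + h) \<omega>) * real (X t \<omega>))"
    "(\<integral>\<omega>. real (X (t + h) \<omega>) * real (X t \<omega>) \<partial>M) = \<alpha> ^ h * (\<mu> * (1 + \<mu>)) + \<mu>\<^sup>2"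
    using nn_to_int[OF m _ corr_nn x0] by auto
qed

lemma cov_X: "covariance M (\<lambda>\<omega>. real (X (t + h) \<omega>)) (\<lambda>\<omega>. real (X t \<omega>)) = \<alpha> ^ h * (\<mu> * (1 + \<mu>))"
  using cov_eq[OF mom_X(1) mom_X(1) corr_int(1)] corr_int(2) mom_X(2) mom_X(2)
  by (simp add: power2_eq_square)

lemma part4: "correlation M (\<lambda>\<omega>. real (X (t + h) \<omega>)) (\<lambda>\<omega>. real (X t \<omega>)) = \<alpha> ^ h"
proof -
  have v: "\<mu> * (1 + \<mu>) > 0" using mu_pos by simp
  have c1: "covariance M (\<lambda>\<omega>. real (X (t + h) \<omega>)) (\<lambda>\<omega>. real (X (t + h) \<omega>)) = \<mu> * (1 + \<mu>)"
    using cov_X[of "t + h" 0] by simp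
  have c2: "covariance M (\<lambda>\<omega>. real (X t \<omega>)) (\<lambda>\<omega>. real (X t \<omega>)) = \<mu> * (1 + \<mu>)"
    using cov_X[of t 0] by simp
  have sq: "sqrt (\<mu> * (1 + \<mu>) * (\<mu> * (1 + \<mu>))) = \<mu> * (1 + \<mu>)" using v by simp
  have n: "\<mu> * (1 + \<mu>) \<noteq> 0" using mu_pos by simp
  show ?thesis unfolding correlation_def cov_X c1 c2 sq using n by simp
qed
end

theorem proposition6:
  fixes M :: "'a measure"
    and X :: "nat \<Rightarrow> 'a \<Rightarrow> nat"
    and eps :: "nat \<Rightarrow> 'a \<Rightarrow> nat"
    and G :: "nat \<Rightarrow> nat \<Rightarrow> 'a \<Rightarrow> nat"
    and \<mu> \<alpha> :: real
  defines "\<mu>\<^sub>\<epsilon> \<equiv> (1 - \<alpha>) * \<mu>"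
  defines "\<pi>\<^sub>0 \<equiv> 1 - \<alpha> / \<mu>\<^sub>\<epsilon>"
  defines "\<sigma>\<epsilon>2 \<equiv> \<mu>\<^sub>\<epsilon> * (1 + \<mu>\<^sub>\<epsilon>)"
  defines "\<pi>star \<equiv> 1 - \<alpha> / (1 + \<mu>\<^sub>\<epsilon>)"
  defines "p \<equiv> (\<mu>\<^sub>\<epsilon> - \<alpha>) / (1 + \<mu>\<^sub>\<epsilon> - \<alpha>)"
  defines "A \<equiv> (\<lambda>l i. real ((i + l - 1) choose l) * \<pi>star ^ i * (1 - \<pi>star) ^ l)"
  defines "B \<equiv> (\<lambda>l m. real ((m - 1) choose (l - 1)) * p ^ (m - l) * (1 - p) ^ l)"
  assumes M: "prob_space M"
    and mu_pos: "\<mu> > 0"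
    and alpha_pos: "0 < \<alpha>" and alpha_bound: "\<alpha> < \<mu> / (1 + \<mu>)"
    and rv_X: "\<And>t. X t \<in> measurable M (count_space UNIV)"
    and rv_eps: "\<And>t. eps t \<in> measurable M (count_space UNIV)"
    and rv_G: "\<And>t i. G t i \<in> measurable M (count_space UNIV)"
    and indep: "prob_space.indep_vars M (\<lambda>_. count_space UNIV) (inar_vars X eps G) inar_index_set"
    and dist_eps: "\<And>t k. t \<ge> 1 \<Longrightarrow> measure M {\<omega>\<in>space M. eps t \<omega> = k} = geo_prob \<mu>\<^sub>\<epsilon> k"
    and dist_G: "\<And>t i k. t \<ge> 1 \<Longrightarrow> i \<ge> 1 \<Longrightarrow>
                   measure M {\<omega>\<in>space M. G t i \<omega> = k} = zmg_prob \<pi>\<^sub>0 \<mu>\<^sub>\<epsilon> k"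
    and recursion: "\<And>t \<omega>. t \<ge> 1 \<Longrightarrow> \<omega> \<in> space M \<Longrightarrow>
                   X t \<omega> = (\<Sum>i = 1..X (t - 1) \<omega>. G t i \<omega>) + eps t \<omega>"
    and dist_X: "\<And>t k. measure M {\<omega>\<in>space M. X t \<omega> = k} = geo_prob \<mu> k"
  shows
    "(\<forall>t\<ge>1. \<forall>j.
        cond_prob M (\<lambda>\<omega>. X t \<omega> = j) (\<lambda>\<omega>. X (t - 1) \<omega> = 0) = geo_prob \<mu>\<^sub>\<epsilon> j
      \<and> (\<forall>i\<ge>1. cond_prob M (\<lambda>\<omega>. X t \<omega> = j) (\<lambda>\<omega>. X (t - 1) \<omega> = i)
            = geo_prob \<mu>\<^sub>\<epsilon> j * (\<pi>star ^ i + (\<Sum>m = 1..j. \<Sum>l = 1..m.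
                 (1 + 1 / \<mu>\<^sub>\<epsilon>) ^ m * A l i * B l m))))
   \<and> (\<forall>t i. cond_expect_at M (\<lambda>\<omega>. real (X (t + 1) \<omega>)) (X t) i = \<alpha> * real i + (1 - \<alpha>) * \<mu>)
   \<and> (\<forall>t i. cond_var_at M (\<lambda>\<omega>. real (X (t + 1) \<omega>)) (X t) i
            = (1 + 2 * \<mu>) * (1 - \<alpha>) * \<alpha> * real i + \<sigma>\<epsilon>2)
   \<and> (\<forall>t h. correlation M (\<lambda>\<omega>. real (X (t + h) \<omega>)) (\<lambda>\<omega>. real (X t \<omega>)) = \<alpha> ^ h)"
proof -
  have me_eq: "\<mu>\<^sub>\<epsilon> = (1 - \<alpha>) * \<mu>" using \<open>\<mu>\<^sub>\<epsilon> \<equiv> (1 - \<alpha>) * \<mu>\<close> by simp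
  have pi0_eq: "\<pi>\<^sub>0 = 1 - \<alpha> / \<mu>\<^sub>\<epsilon>" using \<open>\<pi>\<^sub>0 \<equiv> 1 - \<alpha> / \<mu>\<^sub>\<epsilon>\<close> by simp
  interpret g: geo_inar M X eps G \<mu> \<alpha> "\<mu>\<^sub>\<epsilon>" "\<pi>\<^sub>0"
    by (rule geo_inar.intro[OF M mu_pos alpha_pos alpha_bound rv_X rv_eps rv_G indep dist_eps dist_G recursion dist_X me_eq pi0_eq])
  have ps: "\<pi>star = g.ps" using \<open>\<pi>star \<equiv> 1 - \<alpha> / (1 + \<mu>\<^sub>\<epsilon>)\<close> by (simp add: g.ps_def)
  have pp: "p = g.pp" using \<open>p \<equiv> (\<mu>\<^sub>\<epsilon> - \<alpha>) / (1 + \<mu>\<^sub>\<epsilon> - \<alpha>)\<close> by (simp add: g.pp_def)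
  have Aeq: "A l i = real ((i + l - 1) choose l) * g.ps ^ i * (1 - g.ps) ^ l" for l i
    using \<open>A \<equiv> (\<lambda>l i. real ((i + l - 1) choose l) * \<pi>star ^ i * (1 - \<pi>star) ^ l)\<close> ps by simp
  have Beq: "B l m = real ((m - 1) choose (l - 1)) * g.pp ^ (m - l) * (1 - g.pp) ^ l" for l m
    using \<open>B \<equiv> (\<lambda>l m. real ((m - 1) choose (l - 1)) * p ^ (m - l) * (1 - p) ^ l)\<close> pp by simp
  have sig: "\<sigma>\<epsilon>2 = \<mu>\<^sub>\<epsilon> * (1 + \<mu>\<^sub>\<epsilon>)" using \<open>\<sigma>\<epsilon>2 \<equiv> \<mu>\<^sub>\<epsilon> * (1 + \<mu>\<^sub>\<epsilon>)\<close> by simp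
  show ?thesis
  proof (intro conjI allI impI)
    fix t j :: nat assume t: "t \<ge> 1"
    show "cond_prob M (\<lambda>\<omega>. X t \<omega> = j) (\<lambda>\<omega>. X (t - 1) \<omega> = 0) = geo_prob \<mu>\<^sub>\<epsilon> j"
      by (rule g.part1_zero[OF t])
    fix i :: nat assume i: "i \<ge> 1"
    show "cond_prob M (\<lambda>\<omega>. X t \<omega> = j) (\<lambda>\<omega>. X (t - 1) \<omega> = i)
            = geo_prob \<mu>\<^sub>\<epsilon> j * (\<pi>star ^ i + (\<Sum>m = 1..j. \<Sum>l = 1..m.
                 (1 + 1 / \<mu>\<^sub>\<epsilon>) ^ m * A l i * B l m))"
      unfolding Aeq Beq ps by (rule g.part1_pos[OF t i])
  next
    fix t i :: nat
    show "cond_expect_at M (\<lambda>\<omega>. real (X (t + 1) \<omega>)) (X t) i = \<alpha> * real i + (1 - \<alpha>) * \<mu>"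
      by (rule g.part2)
  next
    fix t i :: nat
    show "cond_var_at M (\<lambda>\<omega>. real (X (t + 1) \<omega>)) (X t) i
            = (1 + 2 * \<mu>) * (1 - \<alpha>) * \<alpha> * real i + \<sigma>\<epsilon>2"
      unfolding sig by (rule g.part3)
  next
    fix t h :: nat
    show "correlation M (\<lambda>\<omega>. real (X (t + h) \<omega>)) (\<lambda>\<omega>. real (X t \<omega>)) = \<alpha> ^ h"
      by (rule g.part4)
  qed
qed

end
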